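(* There is $\varepsilon_0>0$ such that for every $\varepsilon\in(0,\varepsilon_0)$ there is $\delta=\delta(\varepsilon)>0$ with the following property. Let $p=p(n)$ with $np\ge(1/3+\varepsilon)\log n$, let $D=\delta np$ and $G\sim G(n,p)$. Then, with probability at least $1-n^{-\varepsilon}$ (for all sufficiently large $n$), $G$ satisfies each of: (C1) for every set $R\subseteq V(G)$ with $|R|\le 100$ such that $G[R]$ is connected, $|R\cap S_G(D)|\le 2$; (C2) for every set $R\subseteq V(G)$ with $|R|\le100$ such that $G[R]$ has at least as many edges as vertices, $R\cap S_G(D)=\emptyset$; (C3) $G$ has no connected component with $k$ vertices for any $k\in[3,n/2]$.
   Context: $S_G(D)$ is the set of vertices of $G$ of degree at most $D$. $G(n,p)$ is the binomial random graph; $\log$ is the natural logarithm. *)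

theory Defs
  imports Complex_Main
begin

text \<open>Graphs on the vertex set V = {0..<n}; a graph is given by its edge set,
  a set of 2-element subsets of V.\<close>

definition all_edges :: "nat \<Rightarrow> nat set set" where
  "all_edges n = {e. \<exists>u v. u < n \<and> v < n \<and> u \<noteq> v \<and> e = {u, v}}"

definition gnp_prob :: "nat \<Rightarrow> real \<Rightarrow> (nat set set \<Rightarrow> bool) \<Rightarrow> real" where
  "gnp_prob n p P =
     (\<Sum>E \<in> {E. E \<subseteq> all_edges n \<and> P E}.
        p ^ card E * (1 - p) ^ (card (all_edges n) - card E))"

definition degree :: "nat set set \<Rightarrow> nat \<Rightarrow> nat" where
  "degree E v = card {u. {u, v} \<in> E}"

definition small_set :: "nat \<Rightarrow> nat set set \<Rightarrow> real \<Rightarrow> nat set" where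
  "small_set n E D = {v. v < n \<and> real (degree E v) \<le> D}"

definition induced_edges :: "nat set set \<Rightarrow> nat set \<Rightarrow> nat set set" where
  "induced_edges E R = {e \<in> E. e \<subseteq> R}"

definition adj :: "nat set set \<Rightarrow> (nat \<times> nat) set" where
  "adj E = {(u, v). {u, v} \<in> E \<and> u \<noteq> v}"

definition induced_connected :: "nat set set \<Rightarrow> nat set \<Rightarrow> bool" where
  "induced_connected E R \<longleftrightarrow> (\<forall>u\<in>R. \<forall>v\<in>R. (u, v) \<in> (adj (induced_edges E R))\<^sup>*)"

definition component :: "nat \<Rightarrow> nat set set \<Rightarrow> nat \<Rightarrow> nat set" where
  "component n E v = {u. u < n \<and> (v, u) \<in> (adj E)\<^sup>*}"

definition prop_C1 :: "nat \<Rightarrow> nat set set \<Rightarrow> real \<Rightarrow> bool" where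
  "prop_C1 n E D \<longleftrightarrow> (\<forall>R. R \<subseteq> {..<n} \<and> card R \<le> 100 \<and> induced_connected E R
       \<longrightarrow> card (R \<inter> small_set n E D) \<le> 2)"

definition prop_C2 :: "nat \<Rightarrow> nat set set \<Rightarrow> real \<Rightarrow> bool" where
  "prop_C2 n E D \<longleftrightarrow> (\<forall>R. R \<subseteq> {..<n} \<and> card R \<le> 100 \<and> card (induced_edges E R) \<ge> card R
       \<longrightarrow> R \<inter> small_set n E D = {})"

definition prop_C3 :: "nat \<Rightarrow> nat set set \<Rightarrow> bool" where
  "prop_C3 n E \<longleftrightarrow> (\<forall>v<n. \<not> (3 \<le> card (component n E v) \<and> real (card (component n E v)) \<le> real n / 2))"

end

theory Submission
  imports Defs
begin

lemma finite_all_edges: "finite (all_edges n)"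
proof -
  have "all_edges n \<subseteq> (\<lambda>(u,v). {u,v}) ` ({..<n} \<times> {..<n})"
    unfolding all_edges_def by auto
  thus ?thesis by (rule finite_subset) auto
qed

lemma prod_sum_Pow:
  assumes "finite U"
  shows "(\<Sum>E\<in>Pow U. \<Prod>e\<in>U. (h::'a \<Rightarrow> bool \<Rightarrow> real) e (e \<in> E)) = (\<Prod>e\<in>U. h e True + h e False)"
  using assms
proof (induction U rule: finite_induct)
  case empty thus ?case by simp
next
  case (insert x U)
  have PU: "Pow (insert x U) = Pow U \<union> insert x ` Pow U" by (rule Pow_insert)
  have disj: "Pow U \<inter> insert x ` Pow U = {}" using insert by auto
  have inj: "inj_on (insert x) (Pow U)" using insert unfolding inj_on_def
    by (metis Pow_iff insert_absorb insert_ident subset_iff)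
  have s1: "(\<Sum>E\<in>Pow U. \<Prod>e\<in>insert x U. h e (e \<in> E)) = h x False * (\<Sum>E\<in>Pow U. \<Prod>e\<in>U. h e (e \<in> E))"
  proof -
    have "(\<Sum>E\<in>Pow U. \<Prod>e\<in>insert x U. h e (e \<in> E)) = (\<Sum>E\<in>Pow U. h x False * (\<Prod>e\<in>U. h e (e \<in> E)))"
    proof (intro sum.cong refl)
      fix E assume "E \<in> Pow U"
      hence "x \<notin> E" using insert by auto
      thus "(\<Prod>e\<in>insert x U. h e (e \<in> E)) = h x False * (\<Prod>e\<in>U. h e (e \<in> E))"
        using insert by (simp add: prod.insert)
    qed
    thus ?thesis by (simp add: sum_distrib_left)
  qed
  have s2: "(\<Sum>E\<in>insert x ` Pow U. \<Prod>e\<in>insert x U. h e (e \<in> E)) = h x True * (\<Sum>E\<in>Pow U. \<Prod>e\<in>U. h e (e \<in> E))"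
  proof -
    have "(\<Sum>E\<in>insert x ` Pow U. \<Prod>e\<in>insert x U. h e (e \<in> E)) = (\<Sum>E\<in>Pow U. \<Prod>e\<in>insert x U. h e (e \<in> insert x E))"
      by (rule sum.reindex[OF inj, unfolded comp_def])
    also have "\<dots> = (\<Sum>E\<in>Pow U. h x True * (\<Prod>e\<in>U. h e (e \<in> E)))"
    proof (intro sum.cong refl)
      fix E assume "E \<in> Pow U"
      have "(\<Prod>e\<in>U. h e (e \<in> insert x E)) = (\<Prod>e\<in>U. h e (e \<in> E))"
      proof (intro prod.cong refl)
        fix e assume "e \<in> U"
        hence "e \<noteq> x" using insert by auto
        hence "(e \<in> insert x E) = (e \<in> E)" by simp
        thus "h e (e \<in> insert x E) = h e (e \<in> E)" by simp
      qed
      thus "(\<Prod>e\<in>insert x U. h e (e \<in> insert x E)) = h x True * (\<Prod>e\<in>U. h e (e \<in> E))"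
        using insert by (simp add: prod.insert)
    qed
    finally show ?thesis by (simp add: sum_distrib_left)
  qed
  have "(\<Sum>E\<in>Pow (insert x U). \<Prod>e\<in>insert x U. h e (e \<in> E)) =
        (\<Sum>E\<in>Pow U. \<Prod>e\<in>insert x U. h e (e \<in> E)) + (\<Sum>E\<in>insert x ` Pow U. \<Prod>e\<in>insert x U. h e (e \<in> E))"
    unfolding PU using insert disj by (intro sum.union_disjoint) auto
  also have "\<dots> = (h x True + h x False) * (\<Prod>e\<in>U. h e True + h e False)"
    using s1 s2 insert by (simp add: algebra_simps)
  finally show ?case using insert by (simp add: prod.insert)
qed

definition wt :: "nat \<Rightarrow> real \<Rightarrow> nat set set \<Rightarrow> real" where
  "wt n p E = (\<Prod>e\<in>all_edges n. if e \<in> E then p else 1 - p)"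

lemma wt_eq:
  assumes "E \<subseteq> all_edges n"
  shows "p ^ card E * (1 - p) ^ (card (all_edges n) - card E) = wt n p E"
proof -
  have fin: "finite (all_edges n)" by (rule finite_all_edges)
  have fE: "finite E" using assms fin finite_subset by blast
  have "wt n p E = (\<Prod>e\<in>E. if e \<in> E then p else 1 - p) * (\<Prod>e\<in>all_edges n - E. if e \<in> E then p else 1 - p)"
    unfolding wt_def by (subst prod.subset_diff[OF assms fin]) (simp add: mult.commute)
  also have "\<dots> = p ^ card E * (1 - p) ^ card (all_edges n - E)" by simp
  finally show ?thesis using card_Diff_subset[OF fE assms] by simp
qed

definition expect :: "nat \<Rightarrow> real \<Rightarrow> (nat set set \<Rightarrow> real) \<Rightarrow> real" where
  "expect n p \<Phi> = (\<Sum>E\<in>Pow (all_edges n). wt n p E * \<Phi> E)"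

lemma gnp_prob_wt: "gnp_prob n p P = (\<Sum>E\<in>{E\<in>Pow (all_edges n). P E}. wt n p E)"
  unfolding gnp_prob_def by (intro sum.cong) (auto simp: wt_eq)

lemma expect_prod:
  "expect n p (\<lambda>E. \<Prod>e\<in>all_edges n. g e (e \<in> E)) = (\<Prod>e\<in>all_edges n. p * g e True + (1 - p) * g e False)"
proof -
  have "expect n p (\<lambda>E. \<Prod>e\<in>all_edges n. g e (e \<in> E)) =
     (\<Sum>E\<in>Pow (all_edges n). \<Prod>e\<in>all_edges n. (if e \<in> E then p else 1 - p) * g e (e \<in> E))"
    unfolding expect_def wt_def by (simp add: prod.distrib)
  also have "\<dots> = (\<Prod>e\<in>all_edges n. (if True then p else 1 - p) * g e True + (if False then p else 1 - p) * g e False)"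
    by (rule prod_sum_Pow[OF finite_all_edges, where h = "\<lambda>e b. (if b then p else 1 - p) * g e b"])
  finally show ?thesis by simp
qed

lemma expect_one: "expect n p (\<lambda>_. 1) = 1"
  using expect_prod[of n p "\<lambda>_ _. 1"] by simp

lemma expect_add: "expect n p (\<lambda>E. f E + g E) = expect n p f + expect n p g"
  unfolding expect_def by (simp add: algebra_simps sum.distrib)

lemma expect_sum: "finite I \<Longrightarrow> expect n p (\<lambda>E. \<Sum>i\<in>I. f i E) = (\<Sum>i\<in>I. expect n p (f i))"
  unfolding expect_def by (simp add: sum_distrib_left sum.swap[of _ "Pow _"])

lemma expect_cmult: "expect n p (\<lambda>E. c * f E) = c * expect n p f"
  unfolding expect_def by (simp add: sum_distrib_left algebra_simps)

lemma wt_nonneg: "0 \<le> p \<Longrightarrow> p \<le> 1 \<Longrightarrow> 0 \<le> wt n p E"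
  unfolding wt_def by (intro prod_nonneg) auto

lemma gnp_bound:
  assumes p: "0 \<le> p" "p \<le> 1"
    and nn: "\<And>E. 0 \<le> \<Phi> E"
    and cov: "\<And>E. E \<subseteq> all_edges n \<Longrightarrow> \<not> Q E \<Longrightarrow> 1 \<le> \<Phi> E"
  shows "1 - expect n p \<Phi> \<le> gnp_prob n p Q"
proof -
  let ?U = "Pow (all_edges n)"
  have fin: "finite ?U" using finite_all_edges by simp
  have "1 = (\<Sum>E\<in>?U. wt n p E)" using expect_one[of n p] unfolding expect_def by simp
  also have "\<dots> = (\<Sum>E\<in>{E\<in>?U. Q E}. wt n p E) + (\<Sum>E\<in>{E\<in>?U. \<not> Q E}. wt n p E)"
    using fin by (subst sum.union_disjoint[symmetric]) (auto intro: sum.cong)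
  also have "(\<Sum>E\<in>{E\<in>?U. \<not> Q E}. wt n p E) \<le> (\<Sum>E\<in>{E\<in>?U. \<not> Q E}. wt n p E * \<Phi> E)"
    using cov wt_nonneg[OF p] by (intro sum_mono) (auto intro: mult_left_mono[of 1 _ "wt n p _", simplified])
  also have "\<dots> \<le> expect n p \<Phi>"
    unfolding expect_def using fin nn wt_nonneg[OF p] by (intro sum_mono2) auto
  finally show ?thesis unfolding gnp_prob_wt by simp
qed

lemma prod_if_const: "finite U \<Longrightarrow> (\<Prod>e\<in>U. if e \<in> S then (c::real) else 1) = c ^ card (U \<inter> S)"
proof -
  assume f: "finite U"
  have "(\<Prod>e\<in>U. if e \<in> S then c else 1) = (\<Prod>e\<in>U \<inter> S. c)"
    using f by (subst prod.inter_restrict[symmetric]) auto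
  thus ?thesis by simp
qed

definition gg :: "nat set set \<Rightarrow> nat set set \<Rightarrow> nat set set \<Rightarrow> real \<Rightarrow> nat set \<Rightarrow> bool \<Rightarrow> real" where
  "gg F X Y t e b = (if e \<in> F then (if b then 1 else 0) else if e \<in> X then (if b then 0 else 1)
      else if e \<in> Y then (if b then t else 1) else 1)"

lemma gg_nonneg: "0 \<le> t \<Longrightarrow> 0 \<le> gg F X Y t e b"
  unfolding gg_def by auto

lemma expect_gg:
  assumes "F \<subseteq> all_edges n" "X \<subseteq> all_edges n" "Y \<subseteq> all_edges n"
    "F \<inter> X = {}" "F \<inter> Y = {}" "X \<inter> Y = {}"
  shows "expect n p (\<lambda>E. \<Prod>e\<in>all_edges n. gg F X Y t e (e \<in> E))
     = p ^ card F * (1 - p) ^ card X * (1 - p + t * p) ^ card Y"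
proof -
  let ?U = "all_edges n"
  have fin: "finite ?U" by (rule finite_all_edges)
  have "expect n p (\<lambda>E. \<Prod>e\<in>?U. gg F X Y t e (e \<in> E)) = (\<Prod>e\<in>?U. p * gg F X Y t e True + (1 - p) * gg F X Y t e False)"
    by (rule expect_prod)
  also have "\<dots> = (\<Prod>e\<in>?U. (if e \<in> F then p else 1) * (if e \<in> X then 1 - p else 1) * (if e \<in> Y then 1 - p + t * p else 1))"
    using assms by (intro prod.cong refl) (auto simp: gg_def)
  also have "\<dots> = p ^ card (?U \<inter> F) * (1 - p) ^ card (?U \<inter> X) * (1 - p + t * p) ^ card (?U \<inter> Y)"
    by (simp add: prod.distrib prod_if_const[OF fin])
  also have "?U \<inter> F = F" "?U \<inter> X = X" "?U \<inter> Y = Y" using assms by auto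
  ultimately show ?thesis by (simp only:)
qed

lemma gg_real:
  assumes "F \<subseteq> E" "E \<inter> X = {}" "F \<inter> Y = {}"
  shows "(\<Prod>e\<in>all_edges n. gg F X Y t e (e \<in> E)) = t ^ card (all_edges n \<inter> (E \<inter> Y))"
proof -
  have "(\<Prod>e\<in>all_edges n. gg F X Y t e (e \<in> E)) = (\<Prod>e\<in>all_edges n. if e \<in> E \<inter> Y then t else 1)"
    using assms by (intro prod.cong refl) (auto simp: gg_def)
  also have "\<dots> = t ^ card (all_edges n \<inter> (E \<inter> Y))" by (rule prod_if_const[OF finite_all_edges])
  finally show ?thesis .
qed

lemma span:
  assumes fin: "finite K" and rK: "r \<in> K"
    and reach: "\<And>u. u \<in> K \<Longrightarrow> (r, u) \<in> (adj G)\<^sup>*"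
    and clos: "\<And>x. (r, x) \<in> (adj G)\<^sup>* \<Longrightarrow> x \<in> K"
  shows "\<exists>F \<subseteq> G. card F = card K - 1 \<and> (\<forall>e\<in>F. e \<subseteq> K)"
proof -
  define dist where "dist u = (LEAST k. (r, u) \<in> (adj G) ^^ k)" for u
  have dist1: "(r, u) \<in> (adj G) ^^ dist u" if "u \<in> K" for u
  proof -
    from reach[OF that] obtain k where "(r, u) \<in> (adj G) ^^ k" using rtrancl_power by blast
    thus ?thesis unfolding dist_def by (rule LeastI)
  qed
  have dist2: "dist u \<le> k" if "(r, u) \<in> (adj G) ^^ k" for u k
    unfolding dist_def using that by (rule Least_le)
  define par where "par u = (SOME w. (r, w) \<in> (adj G) ^^ (dist u - 1) \<and> (w, u) \<in> adj G)" for u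
  have par: "(r, par u) \<in> (adj G) ^^ (dist u - 1) \<and> (par u, u) \<in> adj G \<and> dist u > 0"
    if "u \<in> K - {r}" for u
  proof -
    have d: "(r, u) \<in> (adj G) ^^ dist u" using dist1 that by auto
    have "dist u \<noteq> 0" proof
      assume "dist u = 0" with d have "u = r" by simp
      thus False using that by simp
    qed
    then obtain m where m: "dist u = Suc m" by (cases "dist u") auto
    with d obtain w where "(r, w) \<in> (adj G) ^^ m" "(w, u) \<in> adj G" by auto
    hence "\<exists>w. (r, w) \<in> (adj G) ^^ (dist u - 1) \<and> (w, u) \<in> adj G" using m by auto
    hence "(r, par u) \<in> (adj G) ^^ (dist u - 1) \<and> (par u, u) \<in> adj G"
      unfolding par_def by (rule someI_ex)
    thus ?thesis using m by simp
  qed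
  have parK: "par u \<in> K" and pardist: "dist (par u) < dist u" and paredge: "{u, par u} \<in> G"
    and parne: "par u \<noteq> u"
    if "u \<in> K - {r}" for u
  proof -
    have a: "(r, par u) \<in> (adj G) ^^ (dist u - 1)" and b: "(par u, u) \<in> adj G" and c: "dist u > 0"
      using par[OF that] by auto
    show "par u \<in> K" using clos a relpow_imp_rtrancl by blast
    show "dist (par u) < dist u" using dist2[OF a] c by simp
    show "{u, par u} \<in> G" using b unfolding adj_def by (simp add: insert_commute)
    show "par u \<noteq> u" using b unfolding adj_def by simp
  qed
  define F where "F = (\<lambda>u. {u, par u}) ` (K - {r})"
  have inj: "inj_on (\<lambda>u. {u, par u}) (K - {r})"
  proof (rule inj_onI)
    fix u v assume u: "u \<in> K - {r}" and v: "v \<in> K - {r}" and eq: "{u, par u} = {v, par v}"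
    show "u = v"
    proof (rule ccontr)
      assume "u \<noteq> v"
      have u1: "u \<in> {v, par v}" unfolding eq[symmetric] by simp
      have v1: "v \<in> {u, par u}" unfolding eq by simp
      have "u = par v" using u1 \<open>u \<noteq> v\<close> by simp
      moreover have "v = par u" using v1 \<open>u \<noteq> v\<close> by simp
      have "dist v < dist u" using pardist[OF u] \<open>v = par u\<close> by simp
      moreover have "dist u < dist v" using pardist[OF v] \<open>u = par v\<close> by simp
      ultimately show False by simp
    qed
  qed
  have "card F = card K - 1" unfolding F_def using card_image[OF inj] fin rK by simp
  moreover have "F \<subseteq> G" unfolding F_def using paredge by auto
  moreover have "\<forall>e\<in>F. e \<subseteq> K" unfolding F_def using parK by auto
  ultimately show ?thesis by blast
qed

definition edges_in :: "nat \<Rightarrow> nat set \<Rightarrow> nat set set" where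
  "edges_in n R = {e \<in> all_edges n. e \<subseteq> R}"

lemma finite_edges_in: "finite (edges_in n R)"
  unfolding edges_in_def using finite_all_edges by simp

lemma card_edges_in: "finite R \<Longrightarrow> card (edges_in n R) \<le> card R ^ 2"
proof -
  assume f: "finite R"
  have "edges_in n R \<subseteq> (\<lambda>(a, b). {a, b}) ` (R \<times> R)"
    unfolding edges_in_def all_edges_def by auto
  hence "card (edges_in n R) \<le> card ((\<lambda>(a, b). {a, b}) ` (R \<times> R))"
    using f by (intro card_mono) auto
  also have "\<dots> \<le> card (R \<times> R)" by (rule card_image_le) (use f in auto)
  finally show ?thesis by (simp add: card_cartesian_product power2_eq_square)
qed

lemma induced_reach:
  assumes "(r, x) \<in> (adj (induced_edges E R))\<^sup>*" "r \<in> R"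
  shows "x \<in> R"
  using assms
proof (induction rule: rtrancl_induct)
  case base thus ?case .
next
  case (step y z)
  thus ?case unfolding adj_def induced_edges_def by auto
qed

lemma C1_span:
  assumes "R \<subseteq> {..<n}" "induced_connected E R" "R \<noteq> {}" "E \<subseteq> all_edges n"
  shows "\<exists>F \<subseteq> E. F \<subseteq> edges_in n R \<and> card F = card R - 1"
proof -
  obtain r where r: "r \<in> R" using assms by auto
  have fin: "finite R" using assms finite_subset by blast
  obtain F where F: "F \<subseteq> induced_edges E R" "card F = card R - 1" "\<forall>e\<in>F. e \<subseteq> R"
  proof -
    have a: "\<And>u. u \<in> R \<Longrightarrow> (r, u) \<in> (adj (induced_edges E R))\<^sup>*"
      using assms(2) r unfolding induced_connected_def by blast
    have b: "\<And>x. (r, x) \<in> (adj (induced_edges E R))\<^sup>* \<Longrightarrow> x \<in> R"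
      using induced_reach r by blast
    show ?thesis using span[OF fin r a b] that by blast
  qed
  have "F \<subseteq> E" using F unfolding induced_edges_def by auto
  moreover have "F \<subseteq> edges_in n R" using F assms \<open>F \<subseteq> E\<close> unfolding edges_in_def by auto
  ultimately show ?thesis using F(2) by blast
qed

lemma comp_reach:
  assumes "(v, x) \<in> (adj E)\<^sup>*" "v < n" "E \<subseteq> all_edges n"
  shows "x < n"
  using assms
proof (induction rule: rtrancl_induct)
  case base thus ?case by simp
next
  case (step y z)
  hence "{y, z} \<in> all_edges n" unfolding adj_def by auto
  thus ?case unfolding all_edges_def by (auto simp: doubleton_eq_iff)
qed

lemma C3_span:
  assumes "v < n" "E \<subseteq> all_edges n"
  shows "\<exists>F \<subseteq> E. F \<subseteq> edges_in n (component n E v) \<and> card F = card (component n E v) - 1"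
proof -
  let ?K = "component n E v"
  have fin: "finite ?K" unfolding component_def by auto
  have vK: "v \<in> ?K" using assms unfolding component_def by auto
  obtain F where F: "F \<subseteq> E" "card F = card ?K - 1" "\<forall>e\<in>F. e \<subseteq> ?K"
  proof -
    have a: "\<And>u. u \<in> ?K \<Longrightarrow> (v, u) \<in> (adj E)\<^sup>*" unfolding component_def by blast
    have b: "\<And>x. (v, x) \<in> (adj E)\<^sup>* \<Longrightarrow> x \<in> ?K"
      using comp_reach[OF _ assms(1,2)] unfolding component_def by blast
    show ?thesis using span[OF fin vK a b] that by blast
  qed
  have "F \<subseteq> edges_in n ?K" using F assms unfolding edges_in_def by auto
  thus ?thesis using F(1,2) by blast
qed

definition Ydeg :: "nat \<Rightarrow> nat set \<Rightarrow> nat set \<Rightarrow> nat set set" where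
  "Ydeg n K T = (\<lambda>(v, x). {v, x}) ` (T \<times> ({..<n} - K))"

lemma Ydeg_sub: "T \<subseteq> K \<Longrightarrow> K \<subseteq> {..<n} \<Longrightarrow> Ydeg n K T \<subseteq> all_edges n"
proof
  fix e assume a: "T \<subseteq> K" "K \<subseteq> {..<n}" "e \<in> Ydeg n K T"
  then obtain v x where "v \<in> T" "x < n" "x \<notin> K" "e = {v, x}" unfolding Ydeg_def by auto
  moreover hence "v \<in> K" "v < n" using a by auto
  ultimately show "e \<in> all_edges n" unfolding all_edges_def by blast
qed

lemma card_Ydeg:
  assumes "T \<subseteq> K" "K \<subseteq> {..<n}"
  shows "card (Ydeg n K T) = card T * (n - card K)"
proof -
  have fK: "finite K" using assms(2) finite_subset by blast
  have fT: "finite T" using assms fK finite_subset by blast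
  have inj: "inj_on (\<lambda>(v, x). {v, x}) (T \<times> ({..<n} - K))"
  proof (rule inj_onI, clarify)
    fix v x v' x' assume a: "v \<in> T" "x < n" "x \<notin> K" "v' \<in> T" "x' < n" "x' \<notin> K" "{v, x} = {v', x'}"
    have "v \<in> K" "v' \<in> K" using a assms by auto
    have "v \<in> {v', x'}" unfolding a(7)[symmetric] by simp
    hence "v = v'" using \<open>v \<in> K\<close> a by auto
    moreover have "x \<in> {v', x'}" unfolding a(7)[symmetric] by simp
    hence "x = x'" using \<open>v' \<in> K\<close> a by auto
    ultimately show "v = v' \<and> x = x'" by simp
  qed
  have "card ({..<n} - K) = n - card K" using assms fK by (simp add: card_Diff_subset)
  thus ?thesis unfolding Ydeg_def using card_image[OF inj] fT by (simp add: card_cartesian_product)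
qed

lemma edges_in_Ydeg_disj: "F \<subseteq> edges_in n K \<Longrightarrow> F \<inter> Ydeg n K T = {}"
proof (rule ccontr)
  assume a: "F \<subseteq> edges_in n K" "F \<inter> Ydeg n K T \<noteq> {}"
  then obtain e where e: "e \<in> F" "e \<in> Ydeg n K T" by blast
  then obtain v x where "x \<notin> K" "e = {v, x}" unfolding Ydeg_def by auto
  moreover have "e \<subseteq> K" using a e unfolding edges_in_def by auto
  ultimately show False by simp
qed

lemma degree_finite: "E \<subseteq> all_edges n \<Longrightarrow> finite {u. {u, v} \<in> E}"
proof -
  assume E: "E \<subseteq> all_edges n"
  have "{u. {u, v} \<in> E} \<subseteq> {..<n}"
  proof
    fix u assume "u \<in> {u. {u, v} \<in> E}"
    hence "{u, v} \<in> all_edges n" using E by auto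
    then obtain a b where "a < n" "b < n" "{u, v} = {a, b}" unfolding all_edges_def by auto
    thus "u \<in> {..<n}" by (auto simp: doubleton_eq_iff)
  qed
  thus ?thesis using finite_subset by blast
qed

lemma card_EY:
  assumes E: "E \<subseteq> all_edges n" and T: "finite T"
  shows "card (E \<inter> Ydeg n K T) \<le> (\<Sum>v\<in>T. degree E v)"
proof -
  have "E \<inter> Ydeg n K T \<subseteq> (\<Union>v\<in>T. (\<lambda>u. {u, v}) ` {u. {u, v} \<in> E})"
  proof
    fix e assume "e \<in> E \<inter> Ydeg n K T"
    then obtain v x where "v \<in> T" "e = {v, x}" "e \<in> E" unfolding Ydeg_def by auto
    hence "e = {x, v}" "{x, v} \<in> E" by (auto simp: insert_commute)
    thus "e \<in> (\<Union>v\<in>T. (\<lambda>u. {u, v}) ` {u. {u, v} \<in> E})" using \<open>v \<in> T\<close> by blast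
  qed
  hence "card (E \<inter> Ydeg n K T) \<le> card (\<Union>v\<in>T. (\<lambda>u. {u, v}) ` {u. {u, v} \<in> E})"
    using T degree_finite[OF E] by (intro card_mono) auto
  also have "\<dots> \<le> (\<Sum>v\<in>T. card ((\<lambda>u. {u, v}) ` {u. {u, v} \<in> E}))"
    by (rule card_UN_le[OF T])
  also have "\<dots> \<le> (\<Sum>v\<in>T. degree E v)"
    unfolding degree_def by (intro sum_mono card_image_le degree_finite[OF E])
  finally show ?thesis .
qed

definition Psi :: "nat \<Rightarrow> real \<Rightarrow> real \<Rightarrow> nat set set \<Rightarrow> nat set \<Rightarrow> nat set \<Rightarrow> nat set set \<Rightarrow> real" where
  "Psi n t D F K T E = t powr (- (real (card T) * D)) * (\<Prod>e\<in>all_edges n. gg F {} (Ydeg n K T) t e (e \<in> E))"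

lemma Psi_nonneg: "0 \<le> t \<Longrightarrow> 0 \<le> Psi n t D F K T E"
  unfolding Psi_def by (intro mult_nonneg_nonneg prod_nonneg gg_nonneg) auto

lemma Psi_real:
  assumes E: "E \<subseteq> all_edges n" and FE: "F \<subseteq> E" and F: "F \<subseteq> edges_in n K"
    and TK: "T \<subseteq> K" and K: "K \<subseteq> {..<n}" and t: "0 < t" "t \<le> 1"
    and deg: "\<And>v. v \<in> T \<Longrightarrow> real (degree E v) \<le> D"
  shows "1 \<le> Psi n t D F K T E"
proof -
  have fT: "finite T" using TK K by (meson finite_lessThan finite_subset)
  let ?m = "card (all_edges n \<inter> (E \<inter> Ydeg n K T))"
  have prodeq: "(\<Prod>e\<in>all_edges n. gg F {} (Ydeg n K T) t e (e \<in> E)) = t ^ ?m"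
    by (rule gg_real) (use FE edges_in_Ydeg_disj[OF F] in auto)
  have "all_edges n \<inter> (E \<inter> Ydeg n K T) = E \<inter> Ydeg n K T" using E by auto
  hence "?m \<le> (\<Sum>v\<in>T. degree E v)" using card_EY[OF E fT, of K] by simp
  hence "real ?m \<le> real (\<Sum>v\<in>T. degree E v)" by linarith
  also have "\<dots> = (\<Sum>v\<in>T. real (degree E v))" by simp
  also have "\<dots> \<le> (\<Sum>v\<in>T. D)" by (intro sum_mono deg)
  finally have mle: "real ?m \<le> real (card T) * D" by simp
  have "t powr (real (card T) * D) \<le> t powr (real ?m)" by (rule powr_mono'[OF mle]) (use t in auto)
  also have "\<dots> = t ^ ?m" using t by (simp add: powr_realpow)
  finally have a: "t powr (real (card T) * D) \<le> t ^ ?m" .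
  have "1 = t powr (- (real (card T) * D)) * t powr (real (card T) * D)"
    using t by (simp add: powr_add[symmetric])
  also have "\<dots> \<le> t powr (- (real (card T) * D)) * t ^ ?m"
    by (rule mult_left_mono[OF a]) simp
  finally show ?thesis unfolding Psi_def prodeq .
qed

lemma Psi_expect:
  assumes F: "F \<subseteq> edges_in n K" and TK: "T \<subseteq> K" and K: "K \<subseteq> {..<n}"
  shows "expect n p (Psi n t D F K T) = t powr (- (real (card T) * D)) * p ^ card F * (1 - p + t * p) ^ (card T * (n - card K))"
proof -
  have "expect n p (Psi n t D F K T) = t powr (- (real (card T) * D)) * expect n p (\<lambda>E. \<Prod>e\<in>all_edges n. gg F {} (Ydeg n K T) t e (e \<in> E))"
    unfolding Psi_def by (rule expect_cmult)
  also have "expect n p (\<lambda>E. \<Prod>e\<in>all_edges n. gg F {} (Ydeg n K T) t e (e \<in> E)) = p ^ card F * (1 - p) ^ card ({}::nat set set) * (1 - p + t * p) ^ card (Ydeg n K T)"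
    using F Ydeg_sub[OF TK K] edges_in_Ydeg_disj[OF F]
    by (intro expect_gg) (auto simp: edges_in_def)
  finally show ?thesis using card_Ydeg[OF TK K] by (simp add: mult.assoc)
qed

definition Psi3 :: "nat \<Rightarrow> nat set set \<Rightarrow> nat set \<Rightarrow> nat set set \<Rightarrow> real" where
  "Psi3 n F K E = (\<Prod>e\<in>all_edges n. gg F (Ydeg n K K) {} 1 e (e \<in> E))"

lemma Psi3_nonneg: "0 \<le> Psi3 n F K E"
  unfolding Psi3_def by (intro prod_nonneg gg_nonneg) auto

lemma Psi3_real:
  assumes "F \<subseteq> E" "E \<inter> Ydeg n K K = {}"
  shows "1 \<le> Psi3 n F K E"
  unfolding Psi3_def by (subst gg_real) (use assms in auto)

lemma Psi3_expect:
  assumes F: "F \<subseteq> edges_in n K" and K: "K \<subseteq> {..<n}"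
  shows "expect n p (Psi3 n F K) = p ^ card F * (1 - p) ^ (card K * (n - card K))"
proof -
  have "expect n p (Psi3 n F K) = p ^ card F * (1 - p) ^ card (Ydeg n K K) * (1 - p + 1 * p) ^ card ({}::nat set set)"
    unfolding Psi3_def using F Ydeg_sub[OF _ K, of K] edges_in_Ydeg_disj[OF F]
    by (intro expect_gg) (auto simp: edges_in_def)
  thus ?thesis using card_Ydeg[OF _ K, of K] by simp
qed

definition S1 :: "nat \<Rightarrow> nat \<Rightarrow> (nat set \<times> nat set set \<times> nat set) set" where
  "S1 n r = {(K, F, T). K \<subseteq> {..<n} \<and> card K = r \<and> F \<subseteq> edges_in n K \<and> card F = r - 1 \<and> T \<subseteq> K \<and> card T = 3}"
definition S2 :: "nat \<Rightarrow> nat \<Rightarrow> (nat set \<times> nat set set \<times> nat set) set" where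
  "S2 n r = {(K, F, T). K \<subseteq> {..<n} \<and> card K = r \<and> F \<subseteq> edges_in n K \<and> card F = r \<and> T \<subseteq> K \<and> card T = 1}"
definition S3 :: "nat \<Rightarrow> nat \<Rightarrow> (nat set \<times> nat set set) set" where
  "S3 n k = {(K, F). K \<subseteq> {..<n} \<and> card K = k \<and> F \<subseteq> edges_in n K \<and> card F = k - 1}"
definition Kset :: "nat \<Rightarrow> nat set" where
  "Kset n = {k. 3 \<le> k \<and> real k \<le> real n / 2}"

lemma finite_S1: "finite (S1 n r)"
proof -
  have "S1 n r \<subseteq> Pow {..<n} \<times> Pow (all_edges n) \<times> Pow {..<n}"
    unfolding S1_def edges_in_def by auto
  thus ?thesis by (rule finite_subset) (auto intro: finite_all_edges)
qed
lemma finite_S2: "finite (S2 n r)"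
proof -
  have "S2 n r \<subseteq> Pow {..<n} \<times> Pow (all_edges n) \<times> Pow {..<n}"
    unfolding S2_def edges_in_def by auto
  thus ?thesis by (rule finite_subset) (auto intro: finite_all_edges)
qed
lemma finite_S3: "finite (S3 n k)"
proof -
  have "S3 n k \<subseteq> Pow {..<n} \<times> Pow (all_edges n)"
    unfolding S3_def edges_in_def by auto
  thus ?thesis by (rule finite_subset) (auto intro: finite_all_edges)
qed
lemma finite_Kset: "finite (Kset n)"
proof -
  have "Kset n \<subseteq> {..n}" unfolding Kset_def by auto
  thus ?thesis using finite_subset by blast
qed

definition Phi :: "nat \<Rightarrow> real \<Rightarrow> real \<Rightarrow> nat set set \<Rightarrow> real" where
  "Phi n t D E =
    (\<Sum>r\<in>{1..100}. \<Sum>i\<in>S1 n r. (case i of (K, F, T) \<Rightarrow> Psi n t D F K T E)) +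
    (\<Sum>r\<in>{1..100}. \<Sum>i\<in>S2 n r. (case i of (K, F, T) \<Rightarrow> Psi n t D F K T E)) +
    (\<Sum>k\<in>Kset n. \<Sum>i\<in>S3 n k. (case i of (K, F) \<Rightarrow> Psi3 n F K E))"

lemma Phi_nonneg: "0 \<le> t \<Longrightarrow> 0 \<le> Phi n t D E"
  unfolding Phi_def
  by (intro add_nonneg_nonneg sum_nonneg) (auto split: prod.splits intro: Psi_nonneg Psi3_nonneg)

lemma one_le_sum2:
  assumes "finite A" "a \<in> A" "finite (B a)" "b \<in> B a" "1 \<le> f a b" "\<And>x y. 0 \<le> f x y" "\<And>x. finite (B x)"
  shows "1 \<le> (\<Sum>x\<in>A. \<Sum>y\<in>B x. (f x y :: real))"
proof -
  have "1 \<le> f a b" by fact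
  also have "\<dots> \<le> (\<Sum>y\<in>B a. f a y)" using assms by (intro member_le_sum) auto
  also have "\<dots> \<le> (\<Sum>x\<in>A. \<Sum>y\<in>B x. f x y)" using assms by (intro member_le_sum sum_nonneg) auto
  finally show ?thesis .
qed

lemma Phi_cover:
  assumes E: "E \<subseteq> all_edges n" and t: "0 < t" "t \<le> 1" and D: "0 \<le> D"
    and bad: "\<not> (prop_C1 n E D \<and> prop_C2 n E D \<and> prop_C3 n E)"
  shows "1 \<le> Phi n t D E"
proof -
  let ?A = "(\<Sum>r\<in>{1..100}. \<Sum>i\<in>S1 n r. (case i of (K, F, T) \<Rightarrow> Psi n t D F K T E))"
  let ?B = "(\<Sum>r\<in>{1..100}. \<Sum>i\<in>S2 n r. (case i of (K, F, T) \<Rightarrow> Psi n t D F K T E))"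
  let ?C = "(\<Sum>k\<in>Kset n. \<Sum>i\<in>S3 n k. (case i of (K, F) \<Rightarrow> Psi3 n F K E))"
  have A0: "0 \<le> ?A" using t by (intro sum_nonneg) (auto split: prod.splits intro: Psi_nonneg)
  have B0: "0 \<le> ?B" using t by (intro sum_nonneg) (auto split: prod.splits intro: Psi_nonneg)
  have C0: "0 \<le> ?C" by (intro sum_nonneg) (auto split: prod.splits intro: Psi3_nonneg)
  have "1 \<le> ?A \<or> 1 \<le> ?B \<or> 1 \<le> ?C"
  proof (cases "prop_C1 n E D")
    case False
    then obtain R where R: "R \<subseteq> {..<n}" "card R \<le> 100" "induced_connected E R"
      "\<not> card (R \<inter> small_set n E D) \<le> 2" unfolding prop_C1_def by blast
    have fR: "finite R" using R(1) by (rule finite_subset) simp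
    have "R \<noteq> {}" using R(4) by auto
    obtain F where F: "F \<subseteq> E" "F \<subseteq> edges_in n R" "card F = card R - 1"
      using C1_span[OF R(1) R(3) \<open>R \<noteq> {}\<close> E] by blast
    have c3: "3 \<le> card (R \<inter> small_set n E D)" using R(4) by simp
    obtain T where T: "T \<subseteq> R \<inter> small_set n E D" "card T = 3"
      using obtain_subset_with_card_n[OF c3] by metis
    have "card R \<ge> 1" using \<open>R \<noteq> {}\<close> fR by (simp add: Suc_leI card_gt_0_iff)
    hence rin: "card R \<in> {1..100}" using R(2) by simp
    have mem: "(R, F, T) \<in> S1 n (card R)" unfolding S1_def using R F T by auto
    have one: "1 \<le> Psi n t D F R T E"
      by (rule Psi_real[OF E F(1) F(2) _ R(1) t]) (use T in \<open>auto simp: small_set_def\<close>)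
    have "1 \<le> ?A"
      by (rule one_le_sum2[where a = "card R" and b = "(R, F, T)"])
        (use rin mem one finite_S1 t in \<open>auto split: prod.splits intro: Psi_nonneg\<close>)
    thus ?thesis by simp
  next
    case C1: True
    show ?thesis
    proof (cases "prop_C2 n E D")
      case False
      then obtain R where R: "R \<subseteq> {..<n}" "card R \<le> 100" "card (induced_edges E R) \<ge> card R"
        "R \<inter> small_set n E D \<noteq> {}" unfolding prop_C2_def by blast
      have fR: "finite R" using R(1) by (rule finite_subset) simp
      obtain v where v: "v \<in> R" "v \<in> small_set n E D" using R(4) by blast
      obtain F where F: "F \<subseteq> induced_edges E R" "card F = card R"
        using obtain_subset_with_card_n[OF R(3)] by metis
      have F1: "F \<subseteq> E" using F unfolding induced_edges_def by auto
      have F2: "F \<subseteq> edges_in n R" using F E unfolding induced_edges_def edges_in_def by auto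
      have "card R \<ge> 1" using v fR by (metis One_nat_def Suc_leI card_gt_0_iff empty_iff)
      hence rin: "card R \<in> {1..100}" using R(2) by simp
      have mem: "(R, F, {v}) \<in> S2 n (card R)" unfolding S2_def using R F2 F v by auto
      have one: "1 \<le> Psi n t D F R {v} E"
        by (rule Psi_real[OF E F1 F2 _ R(1) t]) (use v in \<open>auto simp: small_set_def\<close>)
      have "1 \<le> ?B"
        by (rule one_le_sum2[where a = "card R" and b = "(R, F, {v})"])
          (use rin mem one finite_S2 t in \<open>auto split: prod.splits intro: Psi_nonneg\<close>)
      thus ?thesis by simp
    next
      case C2: True
      with C1 bad have "\<not> prop_C3 n E" by blast
      then obtain v where v: "v < n" "3 \<le> card (component n E v)"
        "real (card (component n E v)) \<le> real n / 2" unfolding prop_C3_def by blast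
      let ?K = "component n E v"
      have K: "?K \<subseteq> {..<n}" unfolding component_def by auto
      obtain F where F: "F \<subseteq> E" "F \<subseteq> edges_in n ?K" "card F = card ?K - 1"
        using C3_span[OF v(1) E] by blast
      have cut: "E \<inter> Ydeg n ?K ?K = {}"
      proof (rule ccontr)
        assume "E \<inter> Ydeg n ?K ?K \<noteq> {}"
        then obtain a b where ab: "a \<in> ?K" "b < n" "b \<notin> ?K" "{a, b} \<in> E"
          unfolding Ydeg_def by auto
        have "a \<noteq> b" using ab by auto
        hence "(a, b) \<in> adj E" using ab unfolding adj_def by auto
        moreover have "(v, a) \<in> (adj E)\<^sup>*" using ab unfolding component_def by auto
        ultimately have "(v, b) \<in> (adj E)\<^sup>*" by simp
        thus False using ab unfolding component_def by auto
      qed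
      have kin: "card ?K \<in> Kset n" using v unfolding Kset_def by auto
      have mem: "(?K, F) \<in> S3 n (card ?K)" unfolding S3_def using K F by auto
      have one: "1 \<le> Psi3 n F ?K E" by (rule Psi3_real[OF F(1) cut])
      have "1 \<le> ?C"
        by (rule one_le_sum2[where a = "card ?K" and b = "(?K, F)"])
          (use kin mem one finite_S3 finite_Kset in \<open>auto split: prod.splits intro: Psi3_nonneg\<close>)
      thus ?thesis by simp
    qed
  qed
  thus ?thesis unfolding Phi_def using A0 B0 C0 by linarith
qed

lemma Phi_expect:
  "expect n p (Phi n t D) =
    (\<Sum>r\<in>{1..100}. real (card (S1 n r)) * (t powr (- (real 3 * D)) * p ^ (r - 1) * (1 - p + t * p) ^ (3 * (n - r)))) +
    (\<Sum>r\<in>{1..100}. real (card (S2 n r)) * (t powr (- (real 1 * D)) * p ^ r * (1 - p + t * p) ^ (1 * (n - r)))) +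
    (\<Sum>k\<in>Kset n. real (card (S3 n k)) * (p ^ (k - 1) * (1 - p) ^ (k * (n - k))))"
proof -
  have e1: "(\<Sum>i\<in>S1 n r. expect n p (\<lambda>E. case i of (K, F, T) \<Rightarrow> Psi n t D F K T E)) =
     real (card (S1 n r)) * (t powr (- (real 3 * D)) * p ^ (r - 1) * (1 - p + t * p) ^ (3 * (n - r)))" for r
  proof -
    have "(\<Sum>i\<in>S1 n r. expect n p (\<lambda>E. case i of (K, F, T) \<Rightarrow> Psi n t D F K T E)) =
        (\<Sum>i\<in>S1 n r. t powr (- (real 3 * D)) * p ^ (r - 1) * (1 - p + t * p) ^ (3 * (n - r)))"
    proof (intro sum.cong refl)
      fix i assume "i \<in> S1 n r"
      then obtain K F T where i: "i = (K, F, T)" "K \<subseteq> {..<n}" "card K = r" "F \<subseteq> edges_in n K"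
        "card F = r - 1" "T \<subseteq> K" "card T = 3" unfolding S1_def by auto
      have "expect n p (\<lambda>E. case i of (K, F, T) \<Rightarrow> Psi n t D F K T E) = expect n p (Psi n t D F K T)"
        using i(1) by simp
      also have "\<dots> = t powr (- (real (card T) * D)) * p ^ card F * (1 - p + t * p) ^ (card T * (n - card K))"
        by (rule Psi_expect[OF i(4) i(6) i(2)])
      finally show "expect n p (\<lambda>E. case i of (K, F, T) \<Rightarrow> Psi n t D F K T E) =
          t powr (- (real 3 * D)) * p ^ (r - 1) * (1 - p + t * p) ^ (3 * (n - r))"
        using i by simp
    qed
    thus ?thesis by simp
  qed
  have e2: "(\<Sum>i\<in>S2 n r. expect n p (\<lambda>E. case i of (K, F, T) \<Rightarrow> Psi n t D F K T E)) =
     real (card (S2 n r)) * (t powr (- (real 1 * D)) * p ^ r * (1 - p + t * p) ^ (1 * (n - r)))" for r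
  proof -
    have "(\<Sum>i\<in>S2 n r. expect n p (\<lambda>E. case i of (K, F, T) \<Rightarrow> Psi n t D F K T E)) =
        (\<Sum>i\<in>S2 n r. t powr (- (real 1 * D)) * p ^ r * (1 - p + t * p) ^ (1 * (n - r)))"
    proof (intro sum.cong refl)
      fix i assume "i \<in> S2 n r"
      then obtain K F T where i: "i = (K, F, T)" "K \<subseteq> {..<n}" "card K = r" "F \<subseteq> edges_in n K"
        "card F = r" "T \<subseteq> K" "card T = 1" unfolding S2_def by auto
      have "expect n p (\<lambda>E. case i of (K, F, T) \<Rightarrow> Psi n t D F K T E) = expect n p (Psi n t D F K T)"
        using i(1) by simp
      also have "\<dots> = t powr (- (real (card T) * D)) * p ^ card F * (1 - p + t * p) ^ (card T * (n - card K))"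
        by (rule Psi_expect[OF i(4) i(6) i(2)])
      finally show "expect n p (\<lambda>E. case i of (K, F, T) \<Rightarrow> Psi n t D F K T E) =
          t powr (- (real 1 * D)) * p ^ r * (1 - p + t * p) ^ (1 * (n - r))"
        using i by simp
    qed
    thus ?thesis by simp
  qed
  have e3: "(\<Sum>i\<in>S3 n k. expect n p (\<lambda>E. case i of (K, F) \<Rightarrow> Psi3 n F K E)) =
     real (card (S3 n k)) * (p ^ (k - 1) * (1 - p) ^ (k * (n - k)))" for k
  proof -
    have "(\<Sum>i\<in>S3 n k. expect n p (\<lambda>E. case i of (K, F) \<Rightarrow> Psi3 n F K E)) =
        (\<Sum>i\<in>S3 n k. p ^ (k - 1) * (1 - p) ^ (k * (n - k)))"
    proof (intro sum.cong refl)
      fix i assume "i \<in> S3 n k"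
      then obtain K F where i: "i = (K, F)" "K \<subseteq> {..<n}" "card K = k" "F \<subseteq> edges_in n K"
        "card F = k - 1" unfolding S3_def by auto
      have "expect n p (\<lambda>E. case i of (K, F) \<Rightarrow> Psi3 n F K E) = expect n p (Psi3 n F K)"
        using i(1) by simp
      also have "\<dots> = p ^ card F * (1 - p) ^ (card K * (n - card K))"
        by (rule Psi3_expect[OF i(4) i(2)])
      finally show "expect n p (\<lambda>E. case i of (K, F) \<Rightarrow> Psi3 n F K E) = p ^ (k - 1) * (1 - p) ^ (k * (n - k))"
        using i by simp
    qed
    thus ?thesis by simp
  qed
  have "expect n p (Phi n t D) =
     expect n p (\<lambda>E. (\<Sum>r\<in>{1..100}. \<Sum>i\<in>S1 n r. (case i of (K, F, T) \<Rightarrow> Psi n t D F K T E))) +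
     expect n p (\<lambda>E. (\<Sum>r\<in>{1..100}. \<Sum>i\<in>S2 n r. (case i of (K, F, T) \<Rightarrow> Psi n t D F K T E))) +
     expect n p (\<lambda>E. (\<Sum>k\<in>Kset n. \<Sum>i\<in>S3 n k. (case i of (K, F) \<Rightarrow> Psi3 n F K E)))"
    unfolding Phi_def expect_add by simp
  also have "\<dots> = (\<Sum>r\<in>{1..100}. \<Sum>i\<in>S1 n r. expect n p (\<lambda>E. case i of (K, F, T) \<Rightarrow> Psi n t D F K T E)) +
     (\<Sum>r\<in>{1..100}. \<Sum>i\<in>S2 n r. expect n p (\<lambda>E. case i of (K, F, T) \<Rightarrow> Psi n t D F K T E)) +
     (\<Sum>k\<in>Kset n. \<Sum>i\<in>S3 n k. expect n p (\<lambda>E. case i of (K, F) \<Rightarrow> Psi3 n F K E))"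
    by (simp add: expect_sum finite_S1 finite_S2 finite_S3 finite_Kset)
  finally show ?thesis by (simp only: e1 e2 e3)
qed

definition Kr :: "nat \<Rightarrow> nat \<Rightarrow> nat set set" where
  "Kr n r = {K. K \<subseteq> {..<n} \<and> card K = r}"

lemma finite_Kr: "finite (Kr n r)"
  unfolding Kr_def by (rule finite_subset[of _ "Pow {..<n}"]) auto

lemma card_Kr: "card (Kr n r) * fact r \<le> n ^ r"
proof -
  have "card (Kr n r) = n choose r" unfolding Kr_def using n_subsets[of "{..<n}" r] by simp
  thus ?thesis using binomial_fact_pow[of n r] by simp
qed

lemma card_Kr': "card (Kr n r) \<le> n ^ r"
proof -
  have "card (Kr n r) \<le> card (Kr n r) * fact r" by simp
  thus ?thesis using card_Kr[of n r] by linarith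
qed

lemma card_S_aux:
  assumes sub: "S \<subseteq> Sigma (Kr n r) (\<lambda>K. Pow (edges_in n K) \<times> Pow K)"
  shows "card S \<le> n ^ r * 2 ^ (r ^ 2) * 2 ^ r"
proof -
  let ?B = "\<lambda>K. Pow (edges_in n K) \<times> Pow K"
  have fK: "\<And>K. K \<in> Kr n r \<Longrightarrow> finite K" unfolding Kr_def
    by (metis finite_lessThan finite_subset mem_Collect_eq)
  have fB: "\<forall>K\<in>Kr n r. finite (?B K)" using fK finite_edges_in by auto
  have "card S \<le> card (Sigma (Kr n r) ?B)"
    by (rule card_mono[OF _ sub]) (use finite_Kr fB in auto)
  also have "\<dots> = (\<Sum>K\<in>Kr n r. card (?B K))" using finite_Kr fB by simp
  also have "\<dots> \<le> (\<Sum>K\<in>Kr n r. 2 ^ (r ^ 2) * 2 ^ r)"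
  proof (intro sum_mono)
    fix K assume K: "K \<in> Kr n r"
    have c: "card K = r" using K unfolding Kr_def by auto
    have "card (?B K) = 2 ^ card (edges_in n K) * 2 ^ card K"
      using fK[OF K] finite_edges_in by (simp add: card_cartesian_product card_Pow)
    also have "\<dots> \<le> 2 ^ (r ^ 2) * 2 ^ r"
      using card_edges_in[OF fK[OF K], of n] c by (simp add: power_increasing)
    finally show "card (?B K) \<le> 2 ^ (r ^ 2) * 2 ^ r" .
  qed
  also have "\<dots> = card (Kr n r) * (2 ^ (r ^ 2) * 2 ^ r)" by simp
  also have "\<dots> \<le> n ^ r * (2 ^ (r ^ 2) * 2 ^ r)" by (intro mult_right_mono card_Kr') simp
  finally show ?thesis by (simp add: mult.assoc)
qed

lemma card_S1: "card (S1 n r) \<le> n ^ r * 2 ^ (r ^ 2) * 2 ^ r"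
  by (rule card_S_aux) (auto simp: S1_def Kr_def)

lemma card_S2: "card (S2 n r) \<le> n ^ r * 2 ^ (r ^ 2) * 2 ^ r"
  by (rule card_S_aux) (auto simp: S2_def Kr_def)

lemma card_S3: "card (S3 n k) * fact k * fact (k - 1) \<le> n ^ k * (k ^ 2) ^ (k - 1)"
proof -
  let ?B = "\<lambda>K. {F. F \<subseteq> edges_in n K \<and> card F = k - 1}"
  have fK: "\<And>K. K \<in> Kr n k \<Longrightarrow> finite K" unfolding Kr_def
    by (metis finite_lessThan finite_subset mem_Collect_eq)
  have fB: "\<forall>K\<in>Kr n k. finite (?B K)" using finite_edges_in by auto
  have eq: "S3 n k = Sigma (Kr n k) ?B" unfolding S3_def Kr_def by auto
  have "card (S3 n k) * fact (k - 1) = (\<Sum>K\<in>Kr n k. card (?B K) * fact (k - 1))"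
    unfolding eq using finite_Kr fB by (simp add: sum_distrib_right)
  also have "\<dots> \<le> (\<Sum>K\<in>Kr n k. (k ^ 2) ^ (k - 1))"
  proof (intro sum_mono)
    fix K assume K: "K \<in> Kr n k"
    have c: "card K = k" using K unfolding Kr_def by auto
    have "card (?B K) = card (edges_in n K) choose (k - 1)"
      using n_subsets[OF finite_edges_in] by simp
    hence "card (?B K) * fact (k - 1) \<le> card (edges_in n K) ^ (k - 1)"
      using binomial_fact_pow by simp
    also have "\<dots> \<le> (k ^ 2) ^ (k - 1)"
      using card_edges_in[OF fK[OF K], of n] c by (simp add: power_mono)
    finally show "card (?B K) * fact (k - 1) \<le> (k ^ 2) ^ (k - 1)" .
  qed
  also have "\<dots> = card (Kr n k) * (k ^ 2) ^ (k - 1)" by simp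
  finally have a: "card (S3 n k) * fact (k - 1) \<le> card (Kr n k) * (k ^ 2) ^ (k - 1)" .
  have "card (S3 n k) * fact k * fact (k - 1) = (card (S3 n k) * fact (k - 1)) * fact k" by simp
  also have "\<dots> \<le> card (Kr n k) * (k ^ 2) ^ (k - 1) * fact k" by (rule mult_right_mono[OF a]) simp
  also have "\<dots> = (card (Kr n k) * fact k) * (k ^ 2) ^ (k - 1)" by simp
  also have "\<dots> \<le> n ^ k * (k ^ 2) ^ (k - 1)" by (rule mult_right_mono[OF card_Kr]) simp
  finally show ?thesis .
qed

lemma x_le_exp: "(x::real) \<le> exp x"
  using exp_ge_add_one_self[of x] by linarith

lemma poly_exp:
  assumes d: "0 \<le> (d::real)" and a: "0 < a"
  shows "d ^ m \<le> (real m / a) ^ m * exp (a * d)"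
proof (cases "m = 0")
  case True thus ?thesis using a d by simp
next
  case False
  hence m: "real m > 0" by simp
  have "a * d / m \<le> exp (a * d / m)" by (rule x_le_exp)
  hence "(a * d / m) ^ m \<le> exp (a * d / m) ^ m"
    using a d m by (intro power_mono) auto
  also have "\<dots> = exp (real m * (a * d / m))" by (rule exp_of_nat_mult[symmetric])
  also have "\<dots> = exp (a * d)" using m by simp
  finally have b: "(a * d / m) ^ m \<le> exp (a * d)" .
  have "d ^ m = (real m / a) ^ m * (a * d / m) ^ m"
    using a m by (simp add: power_mult_distrib[symmetric])
  also have "\<dots> \<le> (real m / a) ^ m * exp (a * d)"
    by (rule mult_left_mono[OF b]) (use a in simp)
  finally show ?thesis .
qed

lemma exp_to_powr:
  assumes n: "0 < (x::real)" and c: "0 \<le> c" and d: "K * ln x \<le> d"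
  shows "exp (- (c * d)) \<le> x powr (- (c * K))"
proof -
  have "- (c * d) \<le> - (c * K) * ln x" using mult_left_mono[OF d c] by (simp add: algebra_simps)
  hence "exp (- (c * d)) \<le> exp (- (c * K) * ln x)" by simp
  also have "\<dots> = x powr (- (c * K))" using n by (simp add: powr_def)
  finally show ?thesis .
qed

lemma beta_bound:
  assumes p: "0 \<le> p" "p \<le> 1" and dl: "0 < \<delta>" "\<delta> < 1" and r: "r \<le> 100"
  shows "\<delta> powr (- (\<delta> * (real n * p))) * (1 - p + \<delta> * p) ^ (n - r)
     \<le> exp 100 * exp (- ((1 - \<delta> - \<delta> * ln (1 / \<delta>)) * (real n * p)))"
proof -
  let ?d = "real n * p"
  have a: "\<delta> powr (- (\<delta> * ?d)) = exp (\<delta> * ?d * ln (1 / \<delta>))"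
    using dl by (simp add: powr_def ln_div)
  have "(1 - \<delta>) * p \<le> 1" using p dl by (simp add: mult_le_one)
  hence x0: "0 \<le> 1 - p + \<delta> * p" by (simp add: algebra_simps)
  have x1: "1 - p + \<delta> * p \<le> exp (- ((1 - \<delta>) * p))"
    using exp_ge_add_one_self[of "- ((1 - \<delta>) * p)"] by (simp add: algebra_simps)
  have "(1 - p + \<delta> * p) ^ (n - r) \<le> exp (- ((1 - \<delta>) * p)) ^ (n - r)"
    by (rule power_mono[OF x1 x0])
  also have "\<dots> = exp (- ((1 - \<delta>) * p * real (n - r)))"
    by (simp add: exp_of_nat_mult[symmetric] algebra_simps)
  also have "\<dots> \<le> exp (100 - (1 - \<delta>) * ?d)"
  proof -
    have "real n - real r \<le> real (n - r)" by simp
    hence "(1 - \<delta>) * p * (real n - real r) \<le> (1 - \<delta>) * p * real (n - r)"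
      using p dl by (intro mult_left_mono) auto
    moreover have "(1 - \<delta>) * p * real r \<le> 100"
    proof -
      have "(1 - \<delta>) * p \<le> 1" using p dl by (simp add: mult_le_one)
      moreover have "real r \<le> 100" using r by simp
      ultimately have "(1 - \<delta>) * p * real r \<le> 1 * 100" by (intro mult_mono) auto
      thus ?thesis by simp
    qed
    ultimately show ?thesis by (simp add: algebra_simps)
  qed
  finally have b: "(1 - p + \<delta> * p) ^ (n - r) \<le> exp (100 - (1 - \<delta>) * ?d)" .
  have "\<delta> powr (- (\<delta> * ?d)) * (1 - p + \<delta> * p) ^ (n - r) \<le> exp (\<delta> * ?d * ln (1 / \<delta>)) * exp (100 - (1 - \<delta>) * ?d)"
    unfolding a by (rule mult_left_mono[OF b]) simp
  also have "\<dots> = exp 100 * exp (- ((1 - \<delta> - \<delta> * ln (1 / \<delta>)) * ?d))"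
    by (simp add: exp_add[symmetric] algebra_simps)
  finally show ?thesis .
qed

definition BIG :: real where "BIG = 2 ^ 10100"

lemma BIG_ge: "r \<le> 100 \<Longrightarrow> (2::real) ^ (r ^ 2) * 2 ^ r \<le> BIG"
proof -
  assume r: "r \<le> 100"
  have "r ^ 2 \<le> 100 ^ 2" using r by (rule power_mono) simp
  hence "r ^ 2 + r \<le> 10100" using r by simp
  hence "(2::real) ^ (r ^ 2 + r) \<le> 2 ^ 10100" by (rule power_increasing) simp
  thus ?thesis unfolding BIG_def by (simp add: power_add)
qed

lemma BIG_pos: "0 < BIG" unfolding BIG_def by simp

lemma powr_mult_nat: "0 < (x::real) \<Longrightarrow> x powr (- (real m * D)) = (x powr (- D)) ^ m"
  by (simp add: powr_def exp_of_nat_mult[symmetric] algebra_simps)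

lemma term_bound:
  assumes p: "0 \<le> p" "p \<le> 1" and dl: "0 < \<delta>" "\<delta> < 1" and r: "r \<le> 100"
    and D: "D = \<delta> * (real n * p)"
  shows "\<delta> powr (- (real m * D)) * (1 - p + \<delta> * p) ^ (m * (n - r))
     \<le> (exp 100 * exp (- ((1 - \<delta> - \<delta> * ln (1 / \<delta>)) * (real n * p)))) ^ m"
proof -
  have "(1 - \<delta>) * p \<le> 1" using p dl by (simp add: mult_le_one)
  hence x0: "0 \<le> 1 - p + \<delta> * p" by (simp add: algebra_simps)
  have "\<delta> powr (- (real m * D)) * (1 - p + \<delta> * p) ^ (m * (n - r))
     = (\<delta> powr (- D) * (1 - p + \<delta> * p) ^ (n - r)) ^ m"
  proof -
    have "(1 - p + \<delta> * p) ^ (m * (n - r)) = ((1 - p + \<delta> * p) ^ (n - r)) ^ m"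
      by (simp add: power_mult[symmetric] mult.commute)
    thus ?thesis using powr_mult_nat[OF dl(1), of m D] by (simp add: power_mult_distrib)
  qed
  also have "\<dots> \<le> (exp 100 * exp (- ((1 - \<delta> - \<delta> * ln (1 / \<delta>)) * (real n * p)))) ^ m"
    by (rule power_mono) (use beta_bound[OF p dl r, of n] D x0 in auto)
  finally show ?thesis .
qed

lemma sum1_bound:
  assumes p: "0 \<le> p" "p \<le> 1" and dl: "0 < \<delta>" "\<delta> < 1" and d1: "1 \<le> real n * p"
    and D: "D = \<delta> * (real n * p)"
  shows "(\<Sum>r\<in>{1..100}. real (card (S1 n r)) * (\<delta> powr (- (real 3 * D)) * p ^ (r - 1) * (1 - p + \<delta> * p) ^ (3 * (n - r))))
     \<le> 100 * (BIG * real n * (real n * p) ^ 99 * (exp 100 * exp (- ((1 - \<delta> - \<delta> * ln (1 / \<delta>)) * (real n * p)))) ^ 3)"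
proof -
  let ?d = "real n * p"
  let ?b = "(exp 100 * exp (- ((1 - \<delta> - \<delta> * ln (1 / \<delta>)) * ?d))) ^ 3"
  have "(\<Sum>r\<in>{1..100}. real (card (S1 n r)) * (\<delta> powr (- (real 3 * D)) * p ^ (r - 1) * (1 - p + \<delta> * p) ^ (3 * (n - r))))
      \<le> real (card {1..100::nat}) * (BIG * real n * ?d ^ 99 * ?b)"
  proof (rule sum_bounded_above)
    fix r :: nat assume "r \<in> {1..100}"
    hence r: "1 \<le> r" "r \<le> 100" by auto
    have "(1 - \<delta>) * p \<le> 1" using p dl by (simp add: mult_le_one)
    hence x0: "0 \<le> 1 - p + \<delta> * p" by (simp add: algebra_simps)
    have c: "real (card (S1 n r)) \<le> real n ^ r * 2 ^ (r ^ 2) * 2 ^ r"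
    proof -
      have "card (S1 n r) \<le> n ^ r * 2 ^ (r ^ 2) * 2 ^ r" by (rule card_S1)
      hence "real (card (S1 n r)) \<le> real (n ^ r * 2 ^ (r ^ 2) * 2 ^ r)" by (simp only: of_nat_le_iff)
      thus ?thesis by simp
    qed
    have tb: "\<delta> powr (- (real 3 * D)) * (1 - p + \<delta> * p) ^ (3 * (n - r)) \<le> ?b"
      by (rule term_bound[OF p dl r(2) D])
    have np: "real n ^ r * p ^ (r - 1) = real n * ?d ^ (r - 1)"
    proof -
      have "real n ^ r = real n * real n ^ (r - 1)" using r by (cases r) auto
      thus ?thesis by (simp add: power_mult_distrib)
    qed
    have dp: "?d ^ (r - 1) \<le> ?d ^ 99" by (rule power_increasing) (use r d1 in auto)
    have "real (card (S1 n r)) * (\<delta> powr (- (real 3 * D)) * p ^ (r - 1) * (1 - p + \<delta> * p) ^ (3 * (n - r)))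
       = real (card (S1 n r)) * p ^ (r - 1) * (\<delta> powr (- (real 3 * D)) * (1 - p + \<delta> * p) ^ (3 * (n - r)))"
      by (simp add: algebra_simps)
    also have "\<dots> \<le> (real n ^ r * 2 ^ (r ^ 2) * 2 ^ r) * p ^ (r - 1) * ?b"
      by (intro mult_mono c tb) (use p x0 in auto)
    also have "\<dots> = (2 ^ (r ^ 2) * 2 ^ r) * (real n ^ r * p ^ (r - 1)) * ?b"
      by (simp add: algebra_simps)
    also have "\<dots> \<le> BIG * (real n * ?d ^ 99) * ?b"
      unfolding np by (intro mult_mono BIG_ge r(2) mult_left_mono dp) (use p BIG_pos in auto)
    finally show "real (card (S1 n r)) * (\<delta> powr (- (real 3 * D)) * p ^ (r - 1) * (1 - p + \<delta> * p) ^ (3 * (n - r)))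
       \<le> BIG * real n * ?d ^ 99 * ?b" by (simp add: algebra_simps)
  qed
  thus ?thesis by simp
qed

lemma sum2_bound:
  assumes p: "0 \<le> p" "p \<le> 1" and dl: "0 < \<delta>" "\<delta> < 1" and d1: "1 \<le> real n * p"
    and D: "D = \<delta> * (real n * p)"
  shows "(\<Sum>r\<in>{1..100}. real (card (S2 n r)) * (\<delta> powr (- (real 1 * D)) * p ^ r * (1 - p + \<delta> * p) ^ (1 * (n - r))))
     \<le> 100 * (BIG * (real n * p) ^ 100 * (exp 100 * exp (- ((1 - \<delta> - \<delta> * ln (1 / \<delta>)) * (real n * p)))) ^ 1)"
proof -
  let ?d = "real n * p"
  let ?b = "(exp 100 * exp (- ((1 - \<delta> - \<delta> * ln (1 / \<delta>)) * ?d))) ^ 1"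
  have "(\<Sum>r\<in>{1..100}. real (card (S2 n r)) * (\<delta> powr (- (real 1 * D)) * p ^ r * (1 - p + \<delta> * p) ^ (1 * (n - r))))
      \<le> real (card {1..100::nat}) * (BIG * ?d ^ 100 * ?b)"
  proof (rule sum_bounded_above)
    fix r :: nat assume "r \<in> {1..100}"
    hence r: "1 \<le> r" "r \<le> 100" by auto
    have "(1 - \<delta>) * p \<le> 1" using p dl by (simp add: mult_le_one)
    hence x0: "0 \<le> 1 - p + \<delta> * p" by (simp add: algebra_simps)
    have c: "real (card (S2 n r)) \<le> real n ^ r * 2 ^ (r ^ 2) * 2 ^ r"
    proof -
      have "card (S2 n r) \<le> n ^ r * 2 ^ (r ^ 2) * 2 ^ r" by (rule card_S2)
      hence "real (card (S2 n r)) \<le> real (n ^ r * 2 ^ (r ^ 2) * 2 ^ r)" by (simp only: of_nat_le_iff)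
      thus ?thesis by simp
    qed
    have tb: "\<delta> powr (- (real 1 * D)) * (1 - p + \<delta> * p) ^ (1 * (n - r)) \<le> ?b"
      by (rule term_bound[OF p dl r(2) D])
    have np: "real n ^ r * p ^ r = ?d ^ r" by (simp add: power_mult_distrib)
    have dp: "?d ^ r \<le> ?d ^ 100" by (rule power_increasing) (use r d1 in auto)
    have "real (card (S2 n r)) * (\<delta> powr (- (real 1 * D)) * p ^ r * (1 - p + \<delta> * p) ^ (1 * (n - r)))
       = real (card (S2 n r)) * p ^ r * (\<delta> powr (- (real 1 * D)) * (1 - p + \<delta> * p) ^ (1 * (n - r)))"
      by (simp add: algebra_simps)
    also have "\<dots> \<le> (real n ^ r * 2 ^ (r ^ 2) * 2 ^ r) * p ^ r * ?b"
      by (intro mult_mono c tb) (use p x0 in auto)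
    also have "\<dots> = (2 ^ (r ^ 2) * 2 ^ r) * (real n ^ r * p ^ r) * ?b"
      by (simp add: algebra_simps)
    also have "\<dots> \<le> BIG * ?d ^ 100 * ?b"
      unfolding np by (intro mult_mono BIG_ge r(2) dp) (use p BIG_pos in auto)
    finally show "real (card (S2 n r)) * (\<delta> powr (- (real 1 * D)) * p ^ r * (1 - p + \<delta> * p) ^ (1 * (n - r)))
       \<le> BIG * ?d ^ 100 * ?b" .
  qed
  thus ?thesis by simp
qed

lemma succ_pow: "(real k + 1) ^ k \<le> exp 1 * real k ^ k"
proof (cases "k = 0")
  case True thus ?thesis by simp
next
  case False
  hence k: "real k > 0" by simp
  have "1 + 1 / real k \<le> exp (1 / real k)" by (rule exp_ge_add_one_self)
  hence "(1 + 1 / real k) ^ k \<le> exp (1 / real k) ^ k" by (rule power_mono) (use k in simp)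
  also have "\<dots> = exp 1" using k by (simp add: exp_of_nat_mult[symmetric])
  finally have a: "(1 + 1 / real k) ^ k \<le> exp 1" .
  have "(real k + 1) ^ k = real k ^ k * (1 + 1 / real k) ^ k"
    using k by (simp add: power_mult_distrib[symmetric] field_simps)
  also have "\<dots> \<le> real k ^ k * exp 1" by (rule mult_left_mono[OF a]) simp
  finally show ?thesis by (simp add: mult.commute)
qed

lemma kk_fact: "real k ^ k \<le> exp (real k) * fact k"
proof (induction k)
  case 0 thus ?case by simp
next
  case (Suc k)
  have "real (Suc k) ^ Suc k = (real k + 1) * (real k + 1) ^ k" by (simp add: add.commute)
  also have "\<dots> \<le> (real k + 1) * (exp 1 * real k ^ k)"
    by (rule mult_left_mono[OF succ_pow]) simp
  also have "\<dots> \<le> (real k + 1) * (exp 1 * (exp (real k) * fact k))"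
    by (intro mult_left_mono Suc.IH) auto
  also have "\<dots> = exp (real (Suc k)) * fact (Suc k)"
    by (simp add: exp_add[symmetric] algebra_simps)
  finally show ?case .
qed

lemma card_S3_real:
  assumes k: "1 \<le> k"
  shows "real (card (S3 n k)) \<le> real k * exp (2 * real k) * real n ^ k"
proof -
  have f: "fact k = real k * fact (k - 1)" using k by (cases k) auto
  have "real (card (S3 n k) * fact k * fact (k - 1)) \<le> real (n ^ k * (k ^ 2) ^ (k - 1))"
    using card_S3[of n k] by (simp only: of_nat_le_iff)
  hence a: "real (card (S3 n k)) * fact k * fact (k - 1) \<le> real n ^ k * (real k ^ 2) ^ (k - 1)" by simp
  have "(real k ^ 2) ^ (k - 1) \<le> (real k ^ 2) ^ k"
    by (rule power_increasing) (use k in auto)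
  also have "\<dots> = (real k ^ k) ^ 2" by (simp add: power_mult[symmetric] mult.commute)
  also have "\<dots> \<le> (exp (real k) * fact k) ^ 2" by (rule power_mono[OF kk_fact]) simp
  also have "\<dots> = real k * exp (2 * real k) * (fact k * fact (k - 1))"
    using f by (simp add: power2_eq_square exp_add[symmetric] algebra_simps)
  finally have b: "(real k ^ 2) ^ (k - 1) \<le> real k * exp (2 * real k) * (fact k * fact (k - 1))" .
  have pos: "0 < (fact k * fact (k - 1) :: real)" by simp
  have "real (card (S3 n k)) * (fact k * fact (k - 1)) = real (card (S3 n k)) * fact k * fact (k - 1)"
    by (simp add: mult.assoc)
  also have "\<dots> \<le> real n ^ k * (real k ^ 2) ^ (k - 1)" by (rule a)
  also have "\<dots> \<le> real n ^ k * (real k * exp (2 * real k) * (fact k * fact (k - 1)))"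
    by (rule mult_left_mono[OF b]) simp
  also have "\<dots> = (real k * exp (2 * real k) * real n ^ k) * (fact k * fact (k - 1))"
    by (simp add: algebra_simps)
  finally show ?thesis using pos by (simp only: mult_le_cancel_right_pos)
qed

lemma de_le: "(d::real) * exp (- d) \<le> 1"
proof -
  have "d \<le> exp d" by (rule x_le_exp)
  hence "d * exp (- d) \<le> exp d * exp (- d)" by (rule mult_right_mono) simp
  thus ?thesis by (simp add: exp_add[symmetric])
qed

lemma sum3_bound:
  assumes p: "0 \<le> p" "p \<le> 1" and d1: "1 \<le> real n * p"
    and rho: "exp 2 * (real n * p) * exp (- ((real n * p) / 2)) \<le> real n powr (- 1 / 24)"
  shows "(\<Sum>k\<in>Kset n. real (card (S3 n k)) * (p ^ (k - 1) * (1 - p) ^ (k * (n - k))))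
     \<le> 101 * (100 * exp 10200 * real n * (real n * p) ^ 2 * exp (- (3 * (real n * p))))
       + real (n + 1) * (real n ^ 2 * real n powr (- 101 / 24))"
proof -
  let ?d = "real n * p"
  let ?f = "\<lambda>k. real (card (S3 n k)) * (p ^ (k - 1) * (1 - p) ^ (k * (n - k)))"
  let ?A = "100 * exp 10200 * real n * ?d ^ 2 * exp (- (3 * ?d))"
  let ?B = "real n ^ 2 * real n powr (- 101 / 24)"
  have "real n * p \<le> real n * 1" by (rule mult_left_mono) (use p in auto)
  hence n1: "1 \<le> real n" using d1 by linarith
  have d0: "0 \<le> ?d" using d1 by simp
  have gen: "?f k \<le> real k * exp (2 * real k) * real n * ?d ^ (k - 1) * exp (- (p * real (k * (n - k))))"
    if k: "k \<in> Kset n" for k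
  proof -
    have k3: "3 \<le> k" using k unfolding Kset_def by auto
    have e1: "(1 - p) ^ (k * (n - k)) \<le> exp (- (p * real (k * (n - k))))"
    proof -
      have "(1 - p) ^ (k * (n - k)) \<le> exp (- p) ^ (k * (n - k))"
        by (rule power_mono) (use exp_ge_add_one_self[of "- p"] p in auto)
      thus ?thesis by (simp add: exp_of_nat_mult[symmetric] mult.commute)
    qed
    have np: "real n ^ k * p ^ (k - 1) = real n * ?d ^ (k - 1)"
    proof -
      have "real n ^ k = real n * real n ^ (k - 1)" using k3 by (cases k) auto
      thus ?thesis by (simp add: power_mult_distrib)
    qed
    have "?f k \<le> (real k * exp (2 * real k) * real n ^ k) * (p ^ (k - 1) * exp (- (p * real (k * (n - k)))))"
      by (intro mult_mono card_S3_real mult_left_mono e1) (use k3 p in auto)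
    also have "\<dots> = real k * exp (2 * real k) * (real n ^ k * p ^ (k - 1)) * exp (- (p * real (k * (n - k))))"
      by (simp add: algebra_simps)
    finally show ?thesis unfolding np by (simp add: algebra_simps)
  qed
  have fA: "?f k \<le> ?A" if k: "k \<in> Kset n" "k \<le> 100" for k
  proof -
    have k3: "3 \<le> k" and kn: "2 * k \<le> n" using k unfolding Kset_def by auto
    have ex: "- (p * real (k * (n - k))) \<le> 10000 - real k * ?d"
    proof -
      have "real (n - k) = real n - real k" using kn by (simp add: of_nat_diff)
      hence h: "real (k * (n - k)) = real k * (real n - real k)" by simp
      have eq: "p * real (k * (n - k)) = p * (real k * real n) - p * (real k * real k)"
        unfolding h by (simp add: algebra_simps)
      have "p * (real k * real k) \<le> 1 * (100 * 100)"
        using k p by (intro mult_mono) (auto intro: mult_mono)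
      moreover have "real k * ?d = p * (real k * real n)" by (simp add: algebra_simps)
      ultimately show ?thesis using eq by linarith
    qed
    have pk: "?d ^ (k - 1) * exp (- (real k * ?d)) \<le> ?d ^ 2 * exp (- (3 * ?d))"
    proof -
      have "?d ^ (k - 1) * exp (- (real k * ?d)) = ?d ^ 2 * exp (- (3 * ?d)) * (?d * exp (- ?d)) ^ (k - 3)"
      proof -
        have e: "k - 1 = 2 + (k - 3)" using k3 by simp
        have "?d ^ (k - 1) = ?d ^ 2 * ?d ^ (k - 3)" unfolding e by (rule power_add)
        moreover have "exp (- (real k * ?d)) = exp (- (3 * ?d)) * exp (- ?d) ^ (k - 3)"
          using k3 by (simp add: exp_add[symmetric] exp_of_nat_mult[symmetric] of_nat_diff algebra_simps)
        ultimately show ?thesis by (simp add: power_mult_distrib algebra_simps)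
      qed
      also have "\<dots> \<le> ?d ^ 2 * exp (- (3 * ?d)) * 1"
        by (intro mult_left_mono power_le_one de_le) (use d0 in auto)
      finally show ?thesis by simp
    qed
    have "?f k \<le> real k * exp (2 * real k) * real n * ?d ^ (k - 1) * exp (- (p * real (k * (n - k))))"
      by (rule gen[OF k(1)])
    also have "\<dots> \<le> 100 * exp 200 * real n * ?d ^ (k - 1) * exp (10000 - real k * ?d)"
      using k(2) d0 ex by (intro mult_mono) auto
    also have "\<dots> = 100 * exp 200 * exp 10000 * real n * (?d ^ (k - 1) * exp (- (real k * ?d)))"
      by (simp add: exp_diff exp_minus field_simps)
    also have "\<dots> \<le> 100 * exp 200 * exp 10000 * real n * (?d ^ 2 * exp (- (3 * ?d)))"
      by (rule mult_left_mono[OF pk]) simp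
    also have "\<dots> = ?A" by (simp add: exp_add[symmetric] algebra_simps)
    finally show ?thesis .
  qed
  have fB: "?f k \<le> ?B" if k: "k \<in> Kset n" "\<not> k \<le> 100" for k
  proof -
    have k101: "101 \<le> k" and kn: "2 * k \<le> n" using k unfolding Kset_def by auto
    let ?r = "exp 2 * ?d * exp (- (?d / 2))"
    have r0: "0 \<le> ?r" using d0 by simp
    have r1: "?r \<le> 1"
    proof -
      have "real n powr (- 1 / 24) \<le> real n powr 0" by (rule powr_mono) (use n1 in auto)
      thus ?thesis using rho n1 by simp
    qed
    have ex: "- (p * real (k * (n - k))) \<le> - (real k * (?d / 2))"
    proof -
      have "real n / 2 \<le> real (n - k)" using kn by (simp add: of_nat_diff)
      hence "p * real k * (real n / 2) \<le> p * real k * real (n - k)" using p by (intro mult_left_mono) auto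
      moreover have "real (k * (n - k)) = real k * real (n - k)" by (rule of_nat_mult)
      ultimately show ?thesis by (simp only:) (simp add: algebra_simps)
    qed
    have "?f k \<le> real k * exp (2 * real k) * real n * ?d ^ (k - 1) * exp (- (p * real (k * (n - k))))"
      by (rule gen[OF k(1)])
    also have "\<dots> \<le> real n * exp (2 * real k) * real n * ?d ^ k * exp (- (real k * (?d / 2)))"
    proof (intro mult_mono)
      show "real k \<le> real n" using kn by simp
      show "?d ^ (k - 1) \<le> ?d ^ k" by (rule power_increasing) (use d1 in auto)
    qed (use ex d0 in auto)
    also have "\<dots> = real n ^ 2 * ?r ^ k"
      by (simp add: power_mult_distrib exp_of_nat_mult[symmetric] exp_add[symmetric] power2_eq_square algebra_simps)
    also have "\<dots> \<le> real n ^ 2 * ?r ^ 101"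
      by (intro mult_left_mono power_decreasing k101 r0 r1) simp
    also have "\<dots> \<le> real n ^ 2 * (real n powr (- 1 / 24)) ^ 101"
      by (intro mult_left_mono power_mono rho r0) simp
    also have "(real n powr (- 1 / 24)) ^ 101 = real n powr (- 101 / 24)"
      using n1 by (simp add: powr_realpow[symmetric] powr_powr)
    finally show ?thesis .
  qed
  have A0: "0 \<le> ?A" using d0 by simp
  have B0: "0 \<le> ?B" by simp
  have "(\<Sum>k\<in>Kset n. ?f k) \<le> (\<Sum>k\<in>Kset n. if k \<le> 100 then ?A else ?B)"
    by (intro sum_mono) (use fA fB in auto)
  also have "\<dots> = (\<Sum>k\<in>Kset n \<inter> {k. k \<le> 100}. ?A) + (\<Sum>k\<in>Kset n \<inter> - {k. k \<le> 100}. ?B)"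
    by (rule sum.If_cases[OF finite_Kset])
  also have "\<dots> \<le> 101 * ?A + real (n + 1) * ?B"
  proof (intro add_mono)
    have "card (Kset n \<inter> {k. k \<le> 100}) \<le> card {..100::nat}" by (rule card_mono) auto
    hence "real (card (Kset n \<inter> {k. k \<le> 100})) \<le> 101" by simp
    hence "real (card (Kset n \<inter> {k. k \<le> 100})) * ?A \<le> 101 * ?A" using A0 by (rule mult_right_mono)
    thus "(\<Sum>k\<in>Kset n \<inter> {k. k \<le> 100}. ?A) \<le> 101 * ?A" by (simp only: sum_constant)
    have "Kset n \<inter> - {k. k \<le> 100} \<subseteq> {..n}" unfolding Kset_def by auto
    hence "card (Kset n \<inter> - {k. k \<le> 100}) \<le> card {..n}" by (intro card_mono) auto
    hence "real (card (Kset n \<inter> - {k. k \<le> 100})) \<le> real (n + 1)" by simp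
    thus "(\<Sum>k\<in>Kset n \<inter> - {k. k \<le> 100}. ?B) \<le> real (n + 1) * ?B" using B0 by (simp add: mult_right_mono)
  qed
  finally show ?thesis .
qed

lemma prob_bound:
  assumes p: "0 \<le> p" "p \<le> 1" and dl: "0 < \<delta>" "\<delta> < 1" and D: "D = \<delta> * (real n * p)"
    and d1: "1 \<le> real n * p"
    and rho: "exp 2 * (real n * p) * exp (- ((real n * p) / 2)) \<le> real n powr (- 1 / 24)"
  shows "1 - gnp_prob n p (\<lambda>E. prop_C1 n E D \<and> prop_C2 n E D \<and> prop_C3 n E)
    \<le> 100 * (BIG * real n * (real n * p) ^ 99 * (exp 100 * exp (- ((1 - \<delta> - \<delta> * ln (1 / \<delta>)) * (real n * p)))) ^ 3)
     + 100 * (BIG * (real n * p) ^ 100 * (exp 100 * exp (- ((1 - \<delta> - \<delta> * ln (1 / \<delta>)) * (real n * p)))) ^ 1)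
     + (101 * (100 * exp 10200 * real n * (real n * p) ^ 2 * exp (- (3 * (real n * p))))
       + real (n + 1) * (real n ^ 2 * real n powr (- 101 / 24)))"
proof -
  have D0: "0 \<le> D" using D dl d1 by simp
  have "1 - expect n p (Phi n \<delta> D) \<le> gnp_prob n p (\<lambda>E. prop_C1 n E D \<and> prop_C2 n E D \<and> prop_C3 n E)"
    by (rule gnp_bound[OF p]) (use Phi_nonneg Phi_cover dl D0 in auto)
  moreover have "expect n p (Phi n \<delta> D) \<le> 100 * (BIG * real n * (real n * p) ^ 99 * (exp 100 * exp (- ((1 - \<delta> - \<delta> * ln (1 / \<delta>)) * (real n * p)))) ^ 3)
     + 100 * (BIG * (real n * p) ^ 100 * (exp 100 * exp (- ((1 - \<delta> - \<delta> * ln (1 / \<delta>)) * (real n * p)))) ^ 1)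
     + (101 * (100 * exp 10200 * real n * (real n * p) ^ 2 * exp (- (3 * (real n * p))))
       + real (n + 1) * (real n ^ 2 * real n powr (- 101 / 24)))"
    unfolding Phi_expect
    by (intro add_mono sum1_bound[OF p dl d1 D] sum2_bound[OF p dl d1 D] sum3_bound[OF p d1 rho])
  ultimately show ?thesis by linarith
qed

lemma coeff_c:
  fixes \<epsilon> \<delta> :: real
  assumes e: "0 < \<epsilon>" "\<epsilon> < 1/100" and dl: "\<delta> = \<epsilon>^2 / 400"
  shows "0 < \<delta>" "\<delta> < 1" "1 - \<epsilon> / 5 \<le> 1 - \<delta> - \<delta> * ln (1 / \<delta>)"
proof -
  have "0 < \<epsilon>^2" using e by simp
  hence "0 < \<epsilon>^2 / 400" by simp
  thus d0: "0 < \<delta>" unfolding dl .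
  have "\<epsilon>^2 \<le> 1" using e by (simp add: power_le_one)
  thus "\<delta> < 1" using dl by simp
  have inv: "1 / \<delta> = (20 / \<epsilon>) ^ 2" unfolding dl by (simp add: power_divide)
  have "ln (1 / \<delta>) = 2 * ln (20 / \<epsilon>)" unfolding inv using e by (simp add: ln_realpow)
  also have "\<dots> \<le> 2 * (20 / \<epsilon> - 1)" using ln_le_minus_one[of "20 / \<epsilon>"] e by simp
  also have "\<dots> \<le> 40 / \<epsilon>" by simp
  finally have l: "ln (1 / \<delta>) \<le> 40 / \<epsilon>" .
  have "\<delta> * ln (1 / \<delta>) \<le> \<delta> * (40 / \<epsilon>)" by (rule mult_left_mono[OF l]) (use d0 in simp)
  also have "\<dots> = \<epsilon> / 10" using dl e by (simp add: field_simps power2_eq_square)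
  finally have a: "\<delta> * ln (1 / \<delta>) \<le> \<epsilon> / 10" .
  have "\<delta> \<le> \<epsilon> / 10"
  proof -
    have "\<epsilon> * \<epsilon> \<le> \<epsilon> * 40" using e by (intro mult_left_mono) auto
    thus ?thesis using dl by (simp add: power2_eq_square)
  qed
  with a show "1 - \<epsilon> / 5 \<le> 1 - \<delta> - \<delta> * ln (1 / \<delta>)" by simp
qed

lemma poly_exp_powr:
  assumes x: "1 \<le> x" and d: "0 \<le> d" and dK: "K * ln x \<le> d" and a: "0 < a" and ca: "a \<le> c"
  shows "d ^ m * exp (- (c * d)) \<le> (real m / a) ^ m * x powr (- ((c - a) * K))"
proof -
  have "d ^ m * exp (- (c * d)) \<le> (real m / a) ^ m * exp (a * d) * exp (- (c * d))"
    by (rule mult_right_mono[OF poly_exp[OF d a]]) simp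
  also have "\<dots> = (real m / a) ^ m * exp (- ((c - a) * d))"
    by (simp add: exp_add[symmetric] algebra_simps)
  also have "\<dots> \<le> (real m / a) ^ m * x powr (- ((c - a) * K))"
    by (intro mult_left_mono exp_to_powr) (use x dK ca a in auto)
  finally show ?thesis .
qed

lemma x_powr_comb: "1 \<le> (x::real) \<Longrightarrow> x * x powr (- e) = x powr (1 - e)"
proof -
  assume x: "1 \<le> x"
  hence x0: "0 \<le> x" by simp
  show ?thesis using powr_add[of x 1 "-e"] x0 by (simp add: abs_of_nonneg)
qed

lemma final_analytic:
  assumes e: "0 < \<epsilon>" "\<epsilon> < 1/100" and dl: "\<delta> = \<epsilon>^2 / 400"
    and p: "0 \<le> p" "p \<le> 1" and n3: "exp 3 \<le> real n"
    and dn: "(1/3 + \<epsilon>) * ln (real n) \<le> real n * p"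
    and r4: "4 * exp 2 \<le> real n powr (1 / 24)"
    and M: "100 * BIG * exp 300 * (99 / (\<epsilon> / 5)) ^ 99 + 100 * BIG * exp 100 * (100 / (\<epsilon> / 5)) ^ 100
            + 10100 * exp 10200 * (2 / (\<epsilon> / 5)) ^ 2 + 2 \<le> real n powr \<epsilon>"
  shows "1 - real n powr (- \<epsilon>) \<le> gnp_prob n p (\<lambda>E. prop_C1 n E (\<delta> * real n * p) \<and> prop_C2 n E (\<delta> * real n * p) \<and> prop_C3 n E)"
proof -
  let ?x = "real n" and ?d = "real n * p"
  define c where "c = 1 - \<delta> - \<delta> * ln (1 / \<delta>)"
  define a where "a = \<epsilon> / 5"
  have d0: "0 < \<delta>" and d1': "\<delta> < 1" and cc: "1 - \<epsilon> / 5 \<le> c"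
    using coeff_c[OF e dl] unfolding c_def by auto
  have a0: "0 < a" using e a_def by simp
  have "1 \<le> exp (3::real)" by simp
  hence x1: "1 \<le> ?x" using n3 by linarith
  have "ln (exp 3) \<le> ln ?x" using n3 x1 by (subst ln_le_cancel_iff) auto
  hence ln3: "3 \<le> ln ?x" by simp
  have dK: "(1/3 + \<epsilon>) * ln ?x \<le> ?d" by (rule dn)
  have dK3: "(1/3) * ln ?x \<le> ?d" using dK ln3 e by (smt (verit) mult_right_mono)
  have dge1: "1 \<le> ?d" using dK3 ln3 by linarith
  have dnn: "0 \<le> ?d" using dge1 by simp
  have rho: "exp 2 * ?d * exp (- (?d / 2)) \<le> ?x powr (- 1 / 24)"
  proof -
    have "?d / 4 \<le> exp (?d / 4)" by (rule x_le_exp)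
    hence "?d \<le> 4 * exp (?d / 4)" by simp
    hence "exp 2 * ?d * exp (- (?d / 2)) \<le> exp 2 * (4 * exp (?d / 4)) * exp (- (?d / 2))"
      by (intro mult_right_mono mult_left_mono) auto
    also have "\<dots> = 4 * exp 2 * exp (- ((1/4) * ?d))" by (simp add: exp_add[symmetric] algebra_simps)
    also have "\<dots> \<le> 4 * exp 2 * ?x powr (- ((1/4) * (1/3)))"
      by (intro mult_left_mono exp_to_powr) (use x1 dK3 in auto)
    also have "\<dots> \<le> ?x powr (1 / 24) * ?x powr (- ((1/4) * (1/3)))"
      by (rule mult_right_mono[OF r4]) simp
    also have "\<dots> = ?x powr (- 1 / 24)" using x1 by (simp add: powr_add[symmetric])
    finally show ?thesis .
  qed
  note pb = prob_bound[OF p d0 d1' refl dge1 rho, folded c_def]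
  let ?y = "?x powr (- (2 * \<epsilon>))"
  let ?K = "1/3 + \<epsilon>"
  have ypos: "0 \<le> ?y" by simp
  have epsq0: "\<epsilon> * \<epsilon> \<le> \<epsilon> * (1/100)" using e by (intro mult_left_mono) auto
  hence epsq: "\<epsilon> * \<epsilon> \<le> \<epsilon> / 100" by simp
  have E1: "1 - (3 * c - a) * ?K \<le> - (2 * \<epsilon>)"
  proof -
    have "(3 - 4 * \<epsilon> / 5) * ?K \<le> (3 * c - a) * ?K"
      by (rule mult_right_mono) (use cc a_def e in auto)
    moreover have "(3 - 4 * \<epsilon> / 5) * ?K = 1 + 3 * \<epsilon> - 4 * \<epsilon> / 15 - 4 / 5 * (\<epsilon> * \<epsilon>)"
      by (simp add: field_simps)
    ultimately show ?thesis using epsq e by linarith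
  qed
  have E2: "- ((c - a) * ?K) \<le> - (2 * \<epsilon>)"
  proof -
    have "(1/2) * (1/3) \<le> (c - a) * ?K"
      by (rule mult_mono) (use cc a_def e in auto)
    thus ?thesis using e by linarith
  qed
  have E3: "1 - (3 - a) * ?K \<le> - (2 * \<epsilon>)"
  proof -
    have "(3 - a) * ?K = 1 + 3 * \<epsilon> - \<epsilon> / 15 - 1 / 5 * (\<epsilon> * \<epsilon>)"
      unfolding a_def by (simp add: algebra_simps)
    thus ?thesis using epsq e by linarith
  qed
  have E4: "3 - 101 / 24 \<le> - (2 * \<epsilon>)" using e by simp
  have pm: "?x powr u \<le> ?y" if "u \<le> - (2 * \<epsilon>)" for u
    by (rule powr_mono[OF that x1])
  have T1: "100 * (BIG * ?x * ?d ^ 99 * (exp 100 * exp (- (c * ?d))) ^ 3)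
      \<le> 100 * BIG * exp 300 * (99 / a) ^ 99 * ?y"
  proof -
    have "(exp 100 * exp (- (c * ?d))) ^ 3 = exp 300 * exp (- ((3 * c) * ?d))"
      by (simp add: power_mult_distrib exp_of_nat_mult[symmetric] algebra_simps)
    hence "100 * (BIG * ?x * ?d ^ 99 * (exp 100 * exp (- (c * ?d))) ^ 3)
        = 100 * BIG * exp 300 * ?x * (?d ^ 99 * exp (- ((3 * c) * ?d)))" by (simp add: algebra_simps)
    also have "\<dots> \<le> 100 * BIG * exp 300 * ?x * ((real 99 / a) ^ 99 * ?x powr (- ((3 * c - a) * ?K)))"
      by (intro mult_left_mono poly_exp_powr[OF x1 dnn dK a0]) (use cc a_def e BIG_pos x1 in auto)
    also have "\<dots> = 100 * BIG * exp 300 * (99 / a) ^ 99 * (?x * ?x powr (- ((3 * c - a) * ?K)))"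
      by (simp add: algebra_simps)
    also have "\<dots> = 100 * BIG * exp 300 * (99 / a) ^ 99 * ?x powr (1 - (3 * c - a) * ?K)"
      by (simp add: x_powr_comb[OF x1])
    also have "\<dots> \<le> 100 * BIG * exp 300 * (99 / a) ^ 99 * ?y"
      by (intro mult_left_mono pm E1) (use BIG_pos a0 in auto)
    finally show ?thesis .
  qed
  have T2: "100 * (BIG * ?d ^ 100 * (exp 100 * exp (- (c * ?d))) ^ 1)
      \<le> 100 * BIG * exp 100 * (100 / a) ^ 100 * ?y"
  proof -
    have "100 * (BIG * ?d ^ 100 * (exp 100 * exp (- (c * ?d))) ^ 1)
        = 100 * BIG * exp 100 * (?d ^ 100 * exp (- (c * ?d)))" by (simp add: algebra_simps)
    also have "\<dots> \<le> 100 * BIG * exp 100 * ((real 100 / a) ^ 100 * ?x powr (- ((c - a) * ?K)))"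
      by (intro mult_left_mono poly_exp_powr[OF x1 dnn dK a0]) (use cc a_def e BIG_pos in auto)
    also have "\<dots> \<le> 100 * BIG * exp 100 * ((real 100 / a) ^ 100 * ?y)"
    proof -
      have q: "?x powr (- ((c - a) * ?K)) \<le> ?y" by (rule pm[OF E2])
      show ?thesis by (rule mult_left_mono[OF mult_left_mono[OF q]]) (use BIG_pos a0 in auto)
    qed
    finally show ?thesis by (simp add: algebra_simps)
  qed
  have T3: "101 * (100 * exp 10200 * ?x * ?d ^ 2 * exp (- (3 * ?d)))
      \<le> 10100 * exp 10200 * (2 / a) ^ 2 * ?y"
  proof -
    have "101 * (100 * exp 10200 * ?x * ?d ^ 2 * exp (- (3 * ?d)))
        = 10100 * exp 10200 * ?x * (?d ^ 2 * exp (- (3 * ?d)))" by (simp add: algebra_simps)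
    also have "\<dots> \<le> 10100 * exp 10200 * ?x * ((real 2 / a) ^ 2 * ?x powr (- ((3 - a) * ?K)))"
      by (intro mult_left_mono poly_exp_powr[OF x1 dnn dK a0]) (use a_def e x1 in auto)
    also have "\<dots> = 10100 * exp 10200 * (2 / a) ^ 2 * (?x * ?x powr (- ((3 - a) * ?K)))"
      by (simp add: algebra_simps)
    also have "\<dots> = 10100 * exp 10200 * (2 / a) ^ 2 * ?x powr (1 - (3 - a) * ?K)"
      by (simp add: x_powr_comb[OF x1])
    also have "\<dots> \<le> 10100 * exp 10200 * (2 / a) ^ 2 * ?y"
      by (intro mult_left_mono pm E3) (use a0 in auto)
    finally show ?thesis .
  qed
  have T4: "real (n + 1) * (?x ^ 2 * ?x powr (- 101 / 24)) \<le> 2 * ?y"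
  proof -
    have "real (n + 1) \<le> 2 * ?x" using x1 by simp
    hence "real (n + 1) * (?x ^ 2 * ?x powr (- 101 / 24)) \<le> 2 * ?x * (?x ^ 2 * ?x powr (- 101 / 24))"
      by (rule mult_right_mono) simp
    also have "\<dots> = 2 * (?x powr 3 * ?x powr (- 101 / 24))"
      using x1 by (simp add: powr_realpow power3_eq_cube power2_eq_square algebra_simps)
    also have "\<dots> = 2 * ?x powr (3 + (- 101 / 24))" by (simp only: powr_add)
    also have "\<dots> = 2 * ?x powr (3 - 101 / 24)" by simp
    also have "\<dots> \<le> 2 * ?y" by (intro mult_left_mono pm E4) auto
    finally show ?thesis .
  qed
  let ?M = "100 * BIG * exp 300 * (99 / (\<epsilon> / 5)) ^ 99 + 100 * BIG * exp 100 * (100 / (\<epsilon> / 5)) ^ 100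
            + 10100 * exp 10200 * (2 / (\<epsilon> / 5)) ^ 2 + 2"
  let ?Ma = "100 * BIG * exp 300 * (99 / a) ^ 99 + 100 * BIG * exp 100 * (100 / a) ^ 100
            + 10100 * exp 10200 * (2 / a) ^ 2 + 2"
  have "1 - gnp_prob n p (\<lambda>E. prop_C1 n E (\<delta> * (real n * p)) \<and> prop_C2 n E (\<delta> * (real n * p)) \<and> prop_C3 n E)
      \<le> 100 * BIG * exp 300 * (99 / a) ^ 99 * ?y + 100 * BIG * exp 100 * (100 / a) ^ 100 * ?y
        + 10100 * exp 10200 * (2 / a) ^ 2 * ?y + 2 * ?y"
    using pb T1 T2 T3 T4 by linarith
  also have "\<dots> = ?Ma * ?y" by (simp add: algebra_simps)
  also have "?Ma * ?y = ?M * ?y" unfolding a_def by simp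
  also have "\<dots> \<le> ?x powr \<epsilon> * ?y" by (rule mult_right_mono[OF M ypos])
  also have "\<dots> = ?x powr (- \<epsilon>)" by (simp add: powr_add[symmetric])
  finally show ?thesis by (simp add: mult.assoc)
qed

lemma ev_powr:
  assumes c: "0 < c"
  shows "\<forall>\<^sub>F n in sequentially. M \<le> real n powr c"
proof -
  define B where "B = max M 1"
  have B1: "1 \<le> B" unfolding B_def by simp
  define N where "N = nat \<lceil>B powr (1 / c)\<rceil>"
  show ?thesis unfolding eventually_sequentially
  proof (intro exI allI impI)
    fix n assume n: "N \<le> n"
    have "B powr (1 / c) \<le> real N" unfolding N_def by linarith
    also have "\<dots> \<le> real n" using n by simp
    finally have a: "B powr (1 / c) \<le> real n" .
    have "B = (B powr (1 / c)) powr c" using B1 c by (simp add: powr_powr)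
    also have "\<dots> \<le> real n powr c" by (rule powr_mono2) (use a c in auto)
    finally show "M \<le> real n powr c" unfolding B_def by simp
  qed
qed

lemma ev_ge: "\<forall>\<^sub>F n in sequentially. (K::real) \<le> real n"
proof -
  have "\<forall>\<^sub>F n in sequentially. nat \<lceil>K\<rceil> \<le> n" by (rule eventually_ge_at_top)
  thus ?thesis by eventually_elim linarith
qed

theorem lemma5p10:
  shows "\<exists>\<epsilon>0>0. \<forall>\<epsilon>::real. 0 < \<epsilon> \<and> \<epsilon> < \<epsilon>0 \<longrightarrow>
     (\<exists>\<delta>>0. \<forall>p :: nat \<Rightarrow> real.
        (\<forall>n. 0 \<le> p n \<and> p n \<le> 1) \<and>
        (\<forall>\<^sub>F n in sequentially. real n * p n \<ge> (1/3 + \<epsilon>) * ln (real n))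
        \<longrightarrow> (\<forall>\<^sub>F n in sequentially.
               gnp_prob n (p n) (\<lambda>E. prop_C1 n E (\<delta> * real n * p n) \<and>
                                     prop_C2 n E (\<delta> * real n * p n) \<and>
                                     prop_C3 n E)
               \<ge> 1 - real n powr (-\<epsilon>)))"
proof (rule exI[of _ "1/100"], intro conjI allI impI)
  show "(0::real) < 1/100" by simp
  fix \<epsilon> :: real assume e: "0 < \<epsilon> \<and> \<epsilon> < 1/100"
  show "\<exists>\<delta>>0. \<forall>p :: nat \<Rightarrow> real.
        (\<forall>n. 0 \<le> p n \<and> p n \<le> 1) \<and>
        (\<forall>\<^sub>F n in sequentially. real n * p n \<ge> (1/3 + \<epsilon>) * ln (real n))
        \<longrightarrow> (\<forall>\<^sub>F n in sequentially.
               gnp_prob n (p n) (\<lambda>E. prop_C1 n E (\<delta> * real n * p n) \<and>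
                                     prop_C2 n E (\<delta> * real n * p n) \<and>
                                     prop_C3 n E)
               \<ge> 1 - real n powr (-\<epsilon>))"
  proof (rule exI[of _ "\<epsilon>^2 / 400"], intro conjI allI impI)
    show "0 < \<epsilon>^2 / 400" using e by simp
    fix p :: "nat \<Rightarrow> real"
    assume pa: "(\<forall>n. 0 \<le> p n \<and> p n \<le> 1) \<and> (\<forall>\<^sub>F n in sequentially. real n * p n \<ge> (1/3 + \<epsilon>) * ln (real n))"
    let ?M = "100 * BIG * exp 300 * (99 / (\<epsilon> / 5)) ^ 99 + 100 * BIG * exp 100 * (100 / (\<epsilon> / 5)) ^ 100
            + 10100 * exp 10200 * (2 / (\<epsilon> / 5)) ^ 2 + 2"
    have ev1: "\<forall>\<^sub>F n in sequentially. exp 3 \<le> real n" by (rule ev_ge)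
    have ev2: "\<forall>\<^sub>F n in sequentially. 4 * exp 2 \<le> real n powr (1 / 24)" by (rule ev_powr) simp
    have ev3: "\<forall>\<^sub>F n in sequentially. ?M \<le> real n powr \<epsilon>" by (rule ev_powr) (use e in simp)
    have ev4: "\<forall>\<^sub>F n in sequentially. real n * p n \<ge> (1/3 + \<epsilon>) * ln (real n)" using pa by blast
    from ev1 ev2 ev3 ev4
    show "\<forall>\<^sub>F n in sequentially.
               gnp_prob n (p n) (\<lambda>E. prop_C1 n E (\<epsilon>^2 / 400 * real n * p n) \<and>
                                     prop_C2 n E (\<epsilon>^2 / 400 * real n * p n) \<and>
                                     prop_C3 n E)
               \<ge> 1 - real n powr (-\<epsilon>)"
    proof eventually_elim
      case (elim n)
      show ?case
        by (rule final_analytic[OF _ _ refl]) (use e pa elim in auto)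
    qed
  qed
qed

end
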